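(* Let $K$ and $K'$ be oriented virtual knot diagrams that are related by a finite sequence of generalized Reidemeister moves. Then $F_K(t,s)=F_{K'}(t,s)$. That is, $F_K(t,s)$ is an invariant of oriented virtual knots.
   Context: Virtual knot diagrams have real and virtual crossings. Generalized Reidemeister moves are the three classical Reidemeister moves, the three purely virtual Reidemeister moves, and the mixed (semi-virtual) third move. The Gauss diagram $G(K)$ of an oriented virtual knot diagram $K$ is built as follows. Take a counterclockwise-oriented circle (the parametrizing circle of the knot). For each real crossing, mark its two preimages and join them by a chord directed from the overcrossing preimage to the undercrossing preimage. Label the chord with the writhe (sign) $w(c)=\pm1$ of the crossing. Real crossings and chords are identified, and $w(K)=\sum_c w(c)$. Two chords intersect if their endpoints interleave on the circle. Let $d$ be a chord intersecting a chord $c$. We say $d$ crosses $c$ from left to right if, viewing $c$ along its direction, the tail of $d$ lies on the left of $c$ and its head on the right. Crossing from right to left is defined in the opposite way. Let $r_1,\dots,r_n$ be the chords crossing $c$ from left to right and $l_1,\dots,l_m$ those crossing $c$ from right to left. The index of $c$ is $\mathrm{Ind}(c)=\sum_i w(r_i)-\sum_j w(l_j)$. Put $N=|\mathrm{Ind}(c)|$. If $N\ge1$, let $\phi:\mathbb{Z}\to\{0,\dots,N-1\}$ be reduction mod $N$; if $N=0$, let $\phi$ be the identity of $\mathbb{Z}$. The index function of $c$ is $$g_c(s)=\sum_i w(r_i)s^{\phi(\mathrm{Ind}(r_i))}-\sum_j w(l_j)s^{\phi(-\mathrm{Ind}(l_j))}\in\mathbb{Z}[s,s^{-1}].$$ It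 satisfies $g_c(1)=\mathrm{Ind}(c)$. Call Laurent polynomials $p,q\in\mathbb{Z}[s,s^{-1}]$ equivalent if $p(1)=q(1)$ and $p\equiv q \pmod{s^{|p(1)|}-1}$. For $p(1)=0$ this means $p=q$. Write $t^{[p]}$ for the basis element of the free abelian group on equivalence classes. Define $$F_K(t,s)=\sum_{c} w(c)\,t^{[g_c(s)]}-w(K)\,t^{[0]},$$ where the sum runs over all real crossings $c$ of $K$. *)

theory Defs
  imports Main "HOL-Library.Poly_Mapping" "HOL-Library.Multiset"
begin

text \<open>A Gauss diagram is encoded as the cyclic sequence (a list, read in the
counterclockwise direction of the parametrizing circle, starting at an arbitrary
base point) of chord endpoints.  An endpoint is a triple (c, ov, e): c is the
label of the chord (= real crossing), ov is True for the overcrossing preimage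
(the tail of the chord) and False for the undercrossing preimage (the head), and
e is the writhe of the crossing.\<close>

type_synonym gpt = "nat \<times> bool \<times> int"
type_synonym gauss = "gpt list"

definition labels :: "gauss \<Rightarrow> nat set" where
  "labels G = fst ` set G"

definition gauss_wf :: "gauss \<Rightarrow> bool" where
  "gauss_wf G \<longleftrightarrow>
     (\<forall>c\<in>labels G. length (filter (\<lambda>p. fst p = c) G) = 2 \<and>
        (\<exists>e\<in>{1, -1}. (c, True, e) \<in> set G \<and> (c, False, e) \<in> set G))"

definition tailpos :: "gauss \<Rightarrow> nat \<Rightarrow> nat" where
  "tailpos G c = (THE i. i < length G \<and> fst (G ! i) = c \<and> fst (snd (G ! i)))"

definition headpos :: "gauss \<Rightarrow> nat \<Rightarrow> nat" where
  "headpos G c = (THE i. i < length G \<and> fst (G ! i) = c \<and> \<not> fst (snd (G ! i)))"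

definition wsign :: "gauss \<Rightarrow> nat \<Rightarrow> int" where
  "wsign G c = snd (snd (G ! tailpos G c))"

definition writhe :: "gauss \<Rightarrow> int" where
  "writhe G = (\<Sum>c\<in>labels G. wsign G c)"

text \<open>Position i lies on the right of chord c (viewed along its direction) iff it
lies on the open counterclockwise arc from the tail of c to the head of c.\<close>
definition on_right :: "gauss \<Rightarrow> nat \<Rightarrow> nat \<Rightarrow> bool" where
  "on_right G c i \<longleftrightarrow>
     (let a = tailpos G c; b = headpos G c in
        if a < b then a < i \<and> i < b else a < i \<or> i < b)"

definition on_left :: "gauss \<Rightarrow> nat \<Rightarrow> nat \<Rightarrow> bool" where
  "on_left G c i \<longleftrightarrow> i \<noteq> tailpos G c \<and> i \<noteq> headpos G c \<and> \<not> on_right G c i"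

definition crossesLR :: "gauss \<Rightarrow> nat \<Rightarrow> nat \<Rightarrow> bool" where
  "crossesLR G d c \<longleftrightarrow> on_left G c (tailpos G d) \<and> on_right G c (headpos G d)"

definition crossesRL :: "gauss \<Rightarrow> nat \<Rightarrow> nat \<Rightarrow> bool" where
  "crossesRL G d c \<longleftrightarrow> on_right G c (tailpos G d) \<and> on_left G c (headpos G d)"

definition ind :: "gauss \<Rightarrow> nat \<Rightarrow> int" where
  "ind G c = (\<Sum>d\<in>{d\<in>labels G. crossesLR G d c}. wsign G d)
            - (\<Sum>d\<in>{d\<in>labels G. crossesRL G d c}. wsign G d)"

definition phi :: "nat \<Rightarrow> int \<Rightarrow> int" where
  "phi N k = (if N = 0 then k else k mod int N)"

text \<open>Z[s,s^-1] is the group ring of Z: finitely supported maps from exponents to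
coefficients, with convolution product.  The monomial a s^k is single k a.\<close>
type_synonym laurent = "int \<Rightarrow>\<^sub>0 int"

definition ev1 :: "laurent \<Rightarrow> int" where
  "ev1 p = (\<Sum>k\<in>Poly_Mapping.keys p. Poly_Mapping.lookup p k)"

definition lequiv :: "laurent \<Rightarrow> laurent \<Rightarrow> bool" where
  "lequiv p q \<longleftrightarrow> ev1 p = ev1 q \<and>
     (\<exists>h::laurent. p - q = (Poly_Mapping.single (int (nat \<bar>ev1 p\<bar>)) 1 - Poly_Mapping.single 0 1) * h)"

definition lclass :: "laurent \<Rightarrow> laurent set" where
  "lclass p = {q. lequiv p q}"

definition gfun :: "gauss \<Rightarrow> nat \<Rightarrow> laurent" where
  "gfun G c = (let N = nat \<bar>ind G c\<bar> in
      (\<Sum>d\<in>{d\<in>labels G. crossesLR G d c}. Poly_Mapping.single (phi N (ind G d)) (wsign G d))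
    - (\<Sum>d\<in>{d\<in>labels G. crossesRL G d c}. Poly_Mapping.single (phi N (- ind G d)) (wsign G d)))"

text \<open>F_K(t,s), an element of the free abelian group on the equivalence classes,
given by its coefficient function: the coefficient of t^[X] for the class X.\<close>
definition FK :: "gauss \<Rightarrow> laurent set \<Rightarrow> int" where
  "FK G X = (\<Sum>c\<in>{c\<in>labels G. lclass (gfun G c) = X}. wsign G c)
            - (if lclass 0 = X then writhe G else 0)"

text \<open>Purely virtual moves and the mixed move do not change the Gauss diagram.
Changing the base point (rotation) and renaming chords do not change the diagram
either.\<close>

definition r3_pairs :: "nat \<Rightarrow> nat \<Rightarrow> nat \<Rightarrow> int \<Rightarrow> int \<Rightarrow> int \<Rightarrow> bool \<Rightarrow> bool \<Rightarrow> bool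
    \<Rightarrow> gauss \<times> gauss \<times> gauss" where
  "r3_pairs x y z ex ey ez oT oM oB =
     ((if oT then [(x, True, ex), (y, True, ey)] else [(y, True, ey), (x, True, ex)]),
      (if oM then [(x, False, ex), (z, True, ez)] else [(z, True, ez), (x, False, ex)]),
      (if oB then [(y, False, ey), (z, False, ez)] else [(z, False, ez), (y, False, ey)]))"

text \<open>Strands: top T (over at x and y), middle M (under at x, over at z), bottom B
(under at y and z).  oT: x before y on T; oM: x before z on M; oB: y before z on B.
A configuration is realizable by an actual triangle of three oriented strands
iff the following sign condition holds.\<close>
definition bsgn :: "bool \<Rightarrow> int" where
  "bsgn b = (if b then 1 else -1)"

definition r3_ok :: "int \<Rightarrow> int \<Rightarrow> int \<Rightarrow> bool \<Rightarrow> bool \<Rightarrow> bool \<Rightarrow> bool" where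
  "r3_ok ex ey ez oT oM oB \<longleftrightarrow>
     ex \<in> {1, -1} \<and> ey \<in> {1, -1} \<and> ez \<in> {1, -1} \<and>
     ey * ez = bsgn oT * bsgn oM \<and> ex * ey = bsgn oM * bsgn oB"

inductive gauss_move :: "gauss \<Rightarrow> gauss \<Rightarrow> bool" where
  rotate: "gauss_move G (rotate n G)"
| relabel: "inj_on (f :: nat \<Rightarrow> nat) (labels G) \<Longrightarrow> gauss_move G (map (\<lambda>(c, ov, e). (f c, ov, e)) G)"
| omega1: "c \<notin> labels (xs @ ys) \<Longrightarrow> e \<in> {1, -1} \<Longrightarrow>
     gauss_move (xs @ ys) (xs @ [(c, ov, e), (c, \<not> ov, e)] @ ys)"
| omega2: "a \<notin> labels (xs @ ys @ zs) \<Longrightarrow> b \<notin> labels (xs @ ys @ zs) \<Longrightarrow> a \<noteq> b \<Longrightarrow>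
     e \<in> {1, -1} \<Longrightarrow>
     Q \<in> {[(a, False, e), (b, False, -e)], [(b, False, -e), (a, False, e)]} \<Longrightarrow>
     P = [(a, True, e), (b, True, -e)] \<Longrightarrow>
     gauss_move (xs @ ys @ zs) (xs @ P @ ys @ Q @ zs)"
| omega2': "a \<notin> labels (xs @ ys @ zs) \<Longrightarrow> b \<notin> labels (xs @ ys @ zs) \<Longrightarrow> a \<noteq> b \<Longrightarrow>
     e \<in> {1, -1} \<Longrightarrow>
     Q \<in> {[(a, False, e), (b, False, -e)], [(b, False, -e), (a, False, e)]} \<Longrightarrow>
     P = [(a, True, e), (b, True, -e)] \<Longrightarrow>
     gauss_move (xs @ ys @ zs) (xs @ Q @ ys @ P @ zs)"
| omega3: "gauss_wf (xs @ P1 @ ys @ P2 @ zs @ P3 @ ws) \<Longrightarrow>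
     distinct [x, y, z] \<Longrightarrow> r3_ok ex ey ez oT oM oB \<Longrightarrow>
     r3_pairs x y z ex ey ez oT oM oB = (PT, PM, PB) \<Longrightarrow>
     mset [P1, P2, P3] = mset [PT, PM, PB :: gauss] \<Longrightarrow>
     gauss_move (xs @ P1 @ ys @ P2 @ zs @ P3 @ ws)
                (xs @ rev P1 @ ys @ rev P2 @ zs @ rev P3 @ ws)"

definition gauss_equiv :: "gauss \<Rightarrow> gauss \<Rightarrow> bool" where
  "gauss_equiv = (symclp (\<lambda>G G'. gauss_wf G \<and> gauss_wf G' \<and> gauss_move G G'))\<^sup>*\<^sup>*"

end

theory Submission
  imports Defs
begin

definition cyc :: "nat \<Rightarrow> nat \<Rightarrow> nat \<Rightarrow> bool" where
  "cyc p a q \<longleftrightarrow> (if p < q then p < a \<and> a < q else p < a \<or> a < q)"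

definition LRpos :: "nat \<Rightarrow> nat \<Rightarrow> nat \<Rightarrow> nat \<Rightarrow> bool" where
  "LRpos a b p q \<longleftrightarrow> a \<noteq> p \<and> a \<noteq> q \<and> \<not> cyc p a q \<and> cyc p b q"

definition RLpos :: "nat \<Rightarrow> nat \<Rightarrow> nat \<Rightarrow> nat \<Rightarrow> bool" where
  "RLpos a b p q \<longleftrightarrow> cyc p a q \<and> b \<noteq> p \<and> b \<noteq> q \<and> \<not> cyc p b q"

definition kappos :: "nat \<Rightarrow> nat \<Rightarrow> nat \<Rightarrow> nat \<Rightarrow> int" where
  "kappos a b p q = (if LRpos a b p q then 1 else if RLpos a b p q then -1 else 0)"

definition kap :: "gauss \<Rightarrow> nat \<Rightarrow> nat \<Rightarrow> int" where
  "kap G d c = kappos (tailpos G d) (headpos G d) (tailpos G c) (headpos G c)"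

lemma on_right_cyc: "on_right G c i = cyc (tailpos G c) i (headpos G c)"
  by (simp add: on_right_def cyc_def Let_def)

lemma crossesLR_pos: "crossesLR G d c = LRpos (tailpos G d) (headpos G d) (tailpos G c) (headpos G c)"
  by (auto simp: crossesLR_def LRpos_def on_left_def on_right_cyc)

lemma crossesRL_pos: "crossesRL G d c = RLpos (tailpos G d) (headpos G d) (tailpos G c) (headpos G c)"
  by (auto simp: crossesRL_def RLpos_def on_left_def on_right_cyc)

lemma LR_RL_excl: "LRpos a b p q \<Longrightarrow> \<not> RLpos a b p q"
  by (simp add: LRpos_def RLpos_def)

lemma finite_labels[simp]: "finite (labels G)"
  by (simp add: labels_def)

lemma ind_kap: "ind G c = (\<Sum>d\<in>labels G. wsign G d * kap G d c)"
proof -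
  have "(\<Sum>d\<in>labels G. wsign G d * kap G d c) =
     (\<Sum>d\<in>labels G. (if crossesLR G d c then wsign G d else 0)) -
     (\<Sum>d\<in>labels G. (if crossesRL G d c then wsign G d else 0))"
    unfolding sum_subtractf[symmetric]
    by (rule sum.cong) (auto simp: kap_def kappos_def crossesLR_pos crossesRL_pos dest: LR_RL_excl)
  then show ?thesis
    by (simp add: ind_def sum.inter_filter)
qed

lemma gfun_kap: "gfun G c = (\<Sum>d\<in>labels G.
   Poly_Mapping.single (phi (nat \<bar>ind G c\<bar>) (kap G d c * ind G d)) (kap G d c * wsign G d))"
proof -
  define N where "N = nat \<bar>ind G c\<bar>"
  have "(\<Sum>d\<in>labels G. Poly_Mapping.single (phi N (kap G d c * ind G d)) (kap G d c * wsign G d)) =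
     (\<Sum>d\<in>labels G. (if crossesLR G d c then Poly_Mapping.single (phi N (ind G d)) (wsign G d) else 0)) -
     (\<Sum>d\<in>labels G. (if crossesRL G d c then Poly_Mapping.single (phi N (- ind G d)) (wsign G d) else 0))"
    unfolding sum_subtractf[symmetric]
    apply (rule sum.cong)
     apply (auto simp: kap_def kappos_def crossesLR_pos crossesRL_pos single_uminus dest: LR_RL_excl)
    done
  then show ?thesis
    unfolding N_def by (simp add: gfun_def sum.inter_filter Let_def)
qed

lemma FK_alt: "FK G X = (\<Sum>c\<in>labels G. if lclass (gfun G c) = X then wsign G c else 0)
    - (if lclass 0 = X then writhe G else 0)"
  by (simp add: FK_def sum.inter_filter)

lemma kappos_antisym:
  assumes "distinct [a,b,p,q]"
  shows "kappos a b p q = - kappos p q a b"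
  using assms unfolding kappos_def LRpos_def RLpos_def cyc_def
  by (auto split: if_splits)

lemma kap_self[simp]: "kap G c c = 0"
  by (simp add: kap_def kappos_def LRpos_def RLpos_def cyc_def)

lemma wf_label:
  assumes "gauss_wf G" "c \<in> labels G"
  shows "card {i. i < length G \<and> fst (G ! i) = c} = 2"
    "\<exists>e\<in>{1,-1}. (c, True, e) \<in> set G \<and> (c, False, e) \<in> set G"
  using assms by (auto simp: gauss_wf_def length_filter_conv_card)

lemma wf_unique:
  assumes wf: "gauss_wf G" and i: "i < length G" and j: "j < length G"
    and f: "fst (G ! i) = fst (G ! j)" and s: "fst (snd (G ! i)) = fst (snd (G ! j))"
  shows "i = j"
proof -
  define c where "c = fst (G ! i)"
  have cl: "c \<in> labels G" using i by (auto simp: labels_def c_def)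
  obtain e where "(c, True, e) \<in> set G" "(c, False, e) \<in> set G"
    using wf_label(2)[OF wf cl] by auto
  then obtain i0 i1 where i0: "i0 < length G" "G ! i0 = (c, True, e)"
    and i1: "i1 < length G" "G ! i1 = (c, False, e)"
    by (metis in_set_conv_nth)
  define S where "S = {i. i < length G \<and> fst (G ! i) = c}"
  have cS: "card S = 2" using wf_label(1)[OF wf cl] by (simp add: S_def)
  have sub: "{i0, i1} \<subseteq> S" using i0 i1 by (auto simp: S_def)
  have ne: "i0 \<noteq> i1" using i0 i1 by auto
  have fin: "finite S" by (simp add: S_def)
  have "S = {i0, i1}"
    using card_subset_eq[OF fin sub] cS ne by simp
  moreover have "i \<in> S" "j \<in> S" using i j f by (auto simp: S_def c_def)
  ultimately show ?thesis using i0 i1 s by auto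
qed

lemma tailpos_eq:
  assumes "gauss_wf G" "i < length G" "G ! i = (c, True, e)"
  shows "tailpos G c = i"
  unfolding tailpos_def
proof (rule the1_equality)
  show "\<exists>!j. j < length G \<and> fst (G ! j) = c \<and> fst (snd (G ! j))"
  proof (rule ex1I[of _ i])
    fix j assume j: "j < length G \<and> fst (G ! j) = c \<and> fst (snd (G ! j))"
    show "j = i" by (rule wf_unique[OF assms(1) _ assms(2)]) (use j assms(3) in auto)
  qed (use assms in auto)
qed (use assms in auto)

lemma headpos_eq:
  assumes "gauss_wf G" "i < length G" "G ! i = (c, False, e)"
  shows "headpos G c = i"
  unfolding headpos_def
proof (rule the1_equality)
  show "\<exists>!j. j < length G \<and> fst (G ! j) = c \<and> \<not> fst (snd (G ! j))"
  proof (rule ex1I[of _ i])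
    fix j assume j: "j < length G \<and> fst (G ! j) = c \<and> \<not> fst (snd (G ! j))"
    show "j = i" by (rule wf_unique[OF assms(1) _ assms(2)]) (use j assms(3) in auto)
  qed (use assms in auto)
qed (use assms in auto)

lemma wf_pos:
  assumes wf: "gauss_wf G" and cl: "c \<in> labels G"
  shows "tailpos G c < length G" "G ! tailpos G c = (c, True, wsign G c)"
    "headpos G c < length G" "G ! headpos G c = (c, False, wsign G c)"
    "wsign G c \<in> {1, -1}"
proof -
  obtain e where e: "e \<in> {1,-1}" "(c, True, e) \<in> set G" "(c, False, e) \<in> set G"
    using wf_label(2)[OF wf cl] by auto
  then obtain i0 i1 where i0: "i0 < length G" "G ! i0 = (c, True, e)"
    and i1: "i1 < length G" "G ! i1 = (c, False, e)"
    by (metis in_set_conv_nth)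
  have t: "tailpos G c = i0" by (rule tailpos_eq[OF wf i0])
  have h: "headpos G c = i1" by (rule headpos_eq[OF wf i1])
  have w: "wsign G c = e" by (simp add: wsign_def t i0)
  show "tailpos G c < length G" "G ! tailpos G c = (c, True, wsign G c)"
    "headpos G c < length G" "G ! headpos G c = (c, False, wsign G c)"
    "wsign G c \<in> {1, -1}"
    using t h w i0 i1 e by auto
qed

lemma wf_distinct_pos:
  assumes wf: "gauss_wf G" and c: "c \<in> labels G" and d: "d \<in> labels G" and cd: "c \<noteq> d"
  shows "distinct [tailpos G d, headpos G d, tailpos G c, headpos G c]"
  using wf_pos[OF wf c] wf_pos[OF wf d] cd by (auto dest: arg_cong[where f=fst] arg_cong[where f="\<lambda>x. fst (snd x)"])

lemma kap_antisym:
  assumes "gauss_wf G" "c \<in> labels G" "d \<in> labels G"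
  shows "kap G d c = - kap G c d"
proof (cases "c = d")
  case True then show ?thesis by simp
next
  case False
  then show ?thesis unfolding kap_def
    by (rule kappos_antisym[OF wf_distinct_pos[OF assms]])
qed

lemma kap_range: "kap G d c \<in> {-1, 0, 1}"
  by (simp add: kap_def kappos_def)

lemma phi_kI: "phi (nat \<bar>I\<bar>) (k * I) = 0" "phi (nat \<bar>I\<bar>) (I * k) = 0"
   "phi (nat \<bar>I\<bar>) (- (k * I)) = 0" "phi (nat \<bar>I\<bar>) (- (I * k)) = 0"
  by (simp_all add: phi_def)

lemma FK_cong:
  assumes "labels G' = labels G" "\<And>c. c \<in> labels G \<Longrightarrow> wsign G' c = wsign G c"
    "\<And>c. c \<in> labels G \<Longrightarrow> gfun G' c = gfun G c"
  shows "FK G' = FK G"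
proof
  fix X
  have w: "writhe G' = writhe G" unfolding writhe_def using assms by (auto intro: sum.cong)
  show "FK G' X = FK G X" unfolding FK_alt w using assms by (auto intro!: sum.cong)
qed

lemma ind_gfun_cong:
  assumes "labels G' = labels G" "\<And>c. c \<in> labels G \<Longrightarrow> wsign G' c = wsign G c"
    "\<And>c d. c \<in> labels G \<Longrightarrow> d \<in> labels G \<Longrightarrow> kap G' d c = kap G d c"
  shows "\<And>c. c \<in> labels G \<Longrightarrow> ind G' c = ind G c"
    "\<And>c. c \<in> labels G \<Longrightarrow> gfun G' c = gfun G c"
proof -
  show i: "\<And>c. c \<in> labels G \<Longrightarrow> ind G' c = ind G c"
    unfolding ind_kap using assms by (auto intro!: sum.cong)
  show "\<And>c. c \<in> labels G \<Longrightarrow> gfun G' c = gfun G c"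
    unfolding gfun_kap using assms i by (auto intro!: sum.cong)
qed

lemma omega1_abs:
  assumes L: "labels G' = insert a (labels G)" and a: "a \<notin> labels G"
    and w: "\<And>c. c \<in> labels G \<Longrightarrow> wsign G' c = wsign G c"
    and k: "\<And>c d. c \<in> labels G \<Longrightarrow> d \<in> labels G \<Longrightarrow> kap G' d c = kap G d c"
    and ka: "\<And>c. c \<in> labels G \<Longrightarrow> kap G' a c = 0 \<and> kap G' c a = 0"
  shows "FK G' = FK G"
proof
  fix X
  have fin: "finite (labels G)" by simp
  have ind: "ind G' c = ind G c" if c: "c \<in> labels G" for c
  proof -
    have "ind G' c = (\<Sum>d\<in>labels G. wsign G' d * kap G' d c)"
      unfolding ind_kap L using a ka[OF c] by (simp add: sum.insert[OF fin a])
    also have "\<dots> = ind G c" unfolding ind_kap using w k c by (auto intro!: sum.cong)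
    finally show ?thesis .
  qed
  have g: "gfun G' c = gfun G c" if c: "c \<in> labels G" for c
  proof -
    have "gfun G' c = (\<Sum>d\<in>labels G. Poly_Mapping.single (phi (nat \<bar>ind G' c\<bar>) (kap G' d c * ind G' d)) (kap G' d c * wsign G' d))"
      unfolding gfun_kap L using a ka[OF c] by (simp add: sum.insert[OF fin a])
    also have "\<dots> = gfun G c" unfolding gfun_kap using w k c ind by (auto intro!: sum.cong)
    finally show ?thesis .
  qed
  have ga: "gfun G' a = 0"
    unfolding gfun_kap L using a ka by (simp add: sum.insert[OF fin a])
  have wr: "writhe G' = writhe G + wsign G' a"
    unfolding writhe_def L using a w by (simp add: sum.insert[OF fin a])
  have "(\<Sum>c\<in>labels G'. if lclass (gfun G' c) = X then wsign G' c else 0) =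
     (if lclass 0 = X then wsign G' a else 0) + (\<Sum>c\<in>labels G. if lclass (gfun G c) = X then wsign G c else 0)"
    unfolding L using a g w ga by (simp add: sum.insert[OF fin a]) (auto intro!: sum.cong simp: w)
  then show "FK G' X = FK G X" unfolding FK_alt wr by simp
qed

lemma omega2_abs:
  assumes wf: "gauss_wf G'" and L: "labels G' = insert a (insert b (labels G))"
    and a: "a \<notin> labels G" and b: "b \<notin> labels G" and ab: "a \<noteq> b"
    and wa: "wsign G' b = - wsign G' a"
    and w: "\<And>c. c \<in> labels G \<Longrightarrow> wsign G' c = wsign G c"
    and k: "\<And>c d. c \<in> labels G \<Longrightarrow> d \<in> labels G \<Longrightarrow> kap G' d c = kap G d c"
    and ka: "\<And>c. c \<in> labels G \<Longrightarrow> kap G' a c = kap G' b c \<and> kap G' c a = kap G' c b"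
  shows "FK G' = FK G"
proof
  fix X
  have fin: "finite (labels G)" by simp
  have a': "a \<notin> insert b (labels G)" using a ab by simp
  have finb: "finite (insert b (labels G))" by simp
  note sums = sum.insert[OF finb a'] sum.insert[OF fin b]
  have aL: "a \<in> labels G'" "b \<in> labels G'" using L by auto
  have kab: "kap G' a b = - kap G' b a" using kap_antisym[OF wf aL(1) aL(2)] by simp
  have ind: "ind G' c = ind G c" if c: "c \<in> labels G" for c
  proof -
    have "ind G' c = (\<Sum>d\<in>labels G. wsign G' d * kap G' d c)"
      unfolding ind_kap L using ka[OF c] wa by (simp add: sums algebra_simps)
    also have "\<dots> = ind G c" unfolding ind_kap using w k c by (auto intro!: sum.cong)
    finally show ?thesis .
  qed
  have iab: "ind G' a = ind G' b"
    unfolding ind_kap L using ka wa kab by (simp add: sums algebra_simps)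
  have g: "gfun G' c = gfun G c" if c: "c \<in> labels G" for c
  proof -
    have "gfun G' c = (\<Sum>d\<in>labels G. Poly_Mapping.single (phi (nat \<bar>ind G' c\<bar>) (kap G' d c * ind G' d)) (kap G' d c * wsign G' d))"
      unfolding gfun_kap L using ka[OF c] wa iab by (simp add: sums single_uminus)
    also have "\<dots> = gfun G c" unfolding gfun_kap using w k c ind by (auto intro!: sum.cong)
    finally show ?thesis .
  qed
  have gab: "gfun G' a = gfun G' b"
    unfolding gfun_kap L using ka wa kab iab ab by (simp add: sums phi_kI algebra_simps)
  have wr: "writhe G' = writhe G"
    unfolding writhe_def L using a w wa by (simp add: sums)
  have "(\<Sum>c\<in>labels G'. if lclass (gfun G' c) = X then wsign G' c else 0) =
     (\<Sum>c\<in>labels G. if lclass (gfun G c) = X then wsign G c else 0)"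
    unfolding L using a g w gab wa by (simp add: sums) (auto intro!: sum.cong simp: w)
  then show "FK G' X = FK G X" unfolding FK_alt wr by simp
qed

lemma omega3_abs:
  assumes L: "labels G' = labels G"
    and w: "\<And>c. c \<in> labels G \<Longrightarrow> wsign G' c = wsign G c"
    and T: "T = {x, y, z}" "T \<subseteq> labels G"
    and k: "\<And>c d. c \<in> labels G \<Longrightarrow> d \<in> labels G \<Longrightarrow> \<not> (c \<in> T \<and> d \<in> T) \<Longrightarrow> kap G' d c = kap G d c"
    and O: "\<And>d. d \<in> labels G - T \<Longrightarrow> kap G d y = kap G d x + kap G d z"
    and T1: "\<And>c. c \<in> T \<Longrightarrow> (\<Sum>d\<in>T. wsign G d * kap G d c) = (\<Sum>d\<in>T. wsign G d * kap G' d c)"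
    and T2: "(\<Sum>d\<in>T. wsign G d * kap G d y) = (\<Sum>d\<in>T. wsign G d * kap G d x) + (\<Sum>d\<in>T. wsign G d * kap G d z)"
    and T3: "\<And>I c. I y = I x + I z \<Longrightarrow> c \<in> T \<Longrightarrow>
       (\<Sum>d\<in>T. Poly_Mapping.single (phi (nat \<bar>I c\<bar>) (kap G d c * I d)) (kap G d c * wsign G d)) =
       (\<Sum>d\<in>T. Poly_Mapping.single (phi (nat \<bar>I c\<bar>) (kap G' d c * I d)) (kap G' d c * wsign G d))"
  shows "FK G' = FK G"
proof -
  have fin: "finite (labels G)" by simp
  note split = sum.subset_diff[OF T(2) fin]
  have ind: "ind G' c = ind G c" if c: "c \<in> labels G" for c
  proof (cases "c \<in> T")
    case False
    then show ?thesis unfolding ind_kap L using w k c by (auto intro!: sum.cong)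
  next
    case True
    have "ind G' c = (\<Sum>d\<in>labels G - T. wsign G d * kap G' d c) + (\<Sum>d\<in>T. wsign G d * kap G' d c)"
      unfolding ind_kap L split using w T(2) by (auto intro!: sum.cong arg_cong2[where f="(+)"])
    also have "\<dots> = (\<Sum>d\<in>labels G - T. wsign G d * kap G d c) + (\<Sum>d\<in>T. wsign G d * kap G d c)"
      using T1[OF True] k c by (auto intro!: sum.cong arg_cong2[where f="(+)"])
    also have "\<dots> = ind G c" unfolding ind_kap split ..
    finally show ?thesis .
  qed
  have iy: "ind G y = ind G x + ind G z"
  proof -
    have "ind G y = (\<Sum>d\<in>labels G - T. wsign G d * kap G d x + wsign G d * kap G d z) + (\<Sum>d\<in>T. wsign G d * kap G d y)"
      unfolding ind_kap split using O by (auto intro!: sum.cong arg_cong2[where f="(+)"] simp: algebra_simps)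
    also have "\<dots> = ind G x + ind G z" unfolding ind_kap split T2 sum.distrib by simp
    finally show ?thesis .
  qed
  have g: "gfun G' c = gfun G c" if c: "c \<in> labels G" for c
  proof (cases "c \<in> T")
    case False
    then show ?thesis unfolding gfun_kap L using w k c ind by (auto intro!: sum.cong)
  next
    case True
    define I where "I = ind G"
    have Iy: "I y = I x + I z" using iy by (simp add: I_def)
    have "gfun G' c = (\<Sum>d\<in>labels G - T. Poly_Mapping.single (phi (nat \<bar>I c\<bar>) (kap G' d c * I d)) (kap G' d c * wsign G d))
       + (\<Sum>d\<in>T. Poly_Mapping.single (phi (nat \<bar>I c\<bar>) (kap G' d c * I d)) (kap G' d c * wsign G d))"
      unfolding gfun_kap L split I_def using w T(2) ind c by (auto intro!: sum.cong arg_cong2[where f="(+)"])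
    also have "\<dots> = (\<Sum>d\<in>labels G - T. Poly_Mapping.single (phi (nat \<bar>I c\<bar>) (kap G d c * I d)) (kap G d c * wsign G d))
       + (\<Sum>d\<in>T. Poly_Mapping.single (phi (nat \<bar>I c\<bar>) (kap G d c * I d)) (kap G d c * wsign G d))"
      using T3[OF Iy True] k c by (auto intro!: sum.cong arg_cong2[where f="(+)"])
    also have "\<dots> = gfun G c" unfolding gfun_kap split I_def ..
    finally show ?thesis .
  qed
  show ?thesis by (rule FK_cong[OF L w g])
qed

lemma pos_map:
  assumes wf: "gauss_wf G" "gauss_wf G'"
    and s: "\<And>i. i < length G \<Longrightarrow> s i < length G' \<and> G' ! s i = G ! i"
    and c: "c \<in> labels G"
  shows "tailpos G' c = s (tailpos G c)" "headpos G' c = s (headpos G c)" "wsign G' c = wsign G c"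
proof -
  note p = wf_pos[OF wf(1) c]
  have a1: "s (tailpos G c) < length G'" "G' ! s (tailpos G c) = (c, True, wsign G c)"
    using s[OF p(1)] p(2) by auto
  have a2: "s (headpos G c) < length G'" "G' ! s (headpos G c) = (c, False, wsign G c)"
    using s[OF p(3)] p(4) by auto
  have t: "tailpos G' c = s (tailpos G c)"
    by (rule tailpos_eq[OF wf(2) a1])
  show "headpos G' c = s (headpos G c)"
    by (rule headpos_eq[OF wf(2) a2])
  show "tailpos G' c = s (tailpos G c)" by (rule t)
  show "wsign G' c = wsign G c"
    unfolding wsign_def t using a1 p(2) by simp
qed

definition ord_eq :: "nat \<Rightarrow> nat \<Rightarrow> nat \<Rightarrow> nat \<Rightarrow> bool" where
  "ord_eq u v u' v' \<longleftrightarrow> (u < v \<longleftrightarrow> u' < v') \<and> (v < u \<longleftrightarrow> v' < u')"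

lemma kappos_cyc_transfer:
  assumes "cyc p a q \<longleftrightarrow> cyc p' a' q'" "cyc p b q \<longleftrightarrow> cyc p' b' q'"
    "a = p \<longleftrightarrow> a' = p'" "a = q \<longleftrightarrow> a' = q'" "b = p \<longleftrightarrow> b' = p'" "b = q \<longleftrightarrow> b' = q'"
  shows "kappos a b p q = kappos a' b' p' q'"
  using assms unfolding kappos_def LRpos_def RLpos_def by simp

lemma cyc_ord_transfer:
  assumes "ord_eq p q p' q'" "ord_eq p a p' a'" "ord_eq a q a' q'"
  shows "cyc p a q \<longleftrightarrow> cyc p' a' q'"
  using assms unfolding ord_eq_def cyc_def by auto

lemma ord_eq_eq: "ord_eq (u::nat) v u' v' \<Longrightarrow> (u = v \<longleftrightarrow> u' = v')"
  unfolding ord_eq_def by (metis linorder_neqE_nat less_irrefl)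

lemma ord_eq_sym: "ord_eq u v u' v' \<Longrightarrow> ord_eq v u v' u'"
  unfolding ord_eq_def by auto

lemma kappos_ord_transfer:
  assumes "ord_eq p q p' q'" "ord_eq p a p' a'" "ord_eq a q a' q'" "ord_eq p b p' b'" "ord_eq b q b' q'"
  shows "kappos a b p q = kappos a' b' p' q'"
proof (rule kappos_cyc_transfer)
  show "cyc p a q = cyc p' a' q'" by (rule cyc_ord_transfer[OF assms(1-3)])
  show "cyc p b q = cyc p' b' q'" by (rule cyc_ord_transfer[OF assms(1,4,5)])
  show "(a = p) = (a' = p')" using ord_eq_eq[OF ord_eq_sym[OF assms(2)]] .
  show "(a = q) = (a' = q')" using ord_eq_eq[OF assms(3)] .
  show "(b = p) = (b' = p')" using ord_eq_eq[OF ord_eq_sym[OF assms(4)]] .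
  show "(b = q) = (b' = q')" using ord_eq_eq[OF assms(5)] .
qed

lemma kappos_mono:
  assumes m: "\<And>i j. f i < f j \<longleftrightarrow> i < j"
  shows "kappos (f a) (f b) (f p) (f q) = kappos a b p q"
  by (rule sym, rule kappos_ord_transfer) (auto simp: ord_eq_def m)

lemma kap_map_mono:
  assumes wf: "gauss_wf G" "gauss_wf G'"
    and s: "\<And>i. i < length G \<Longrightarrow> f i < length G' \<and> G' ! f i = G ! i"
    and m: "\<And>i j. f i < f j \<longleftrightarrow> i < j"
    and c: "c \<in> labels G" and d: "d \<in> labels G"
  shows "kap G' d c = kap G d c"
proof -
  note pc = pos_map[OF wf s c] and pd = pos_map[OF wf s d]
  have "kap G' d c = kappos (f (tailpos G d)) (f (headpos G d)) (f (tailpos G c)) (f (headpos G c))"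
    unfolding kap_def using pc pd by simp
  then show ?thesis unfolding kap_def kappos_mono[OF m] .
qed

definition rr :: "nat \<Rightarrow> nat \<Rightarrow> nat \<Rightarrow> nat" where
  "rr n k i = (if k \<le> i then i - k else i + n - k)"

lemma cyc_rr:
  assumes "p < n" "a < n" "q < n" "k < n"
  shows "cyc (rr n k p) (rr n k a) (rr n k q) = cyc p a q"
  using assms unfolding rr_def cyc_def by (simp split: if_splits; arith)

lemma rr_inj:
  assumes "p < n" "a < n" "k < n"
  shows "rr n k a = rr n k p \<longleftrightarrow> a = p"
  using assms unfolding rr_def by auto

lemma rr_nth:
  assumes "i < length G"
  shows "rr (length G) (n mod length G) i < length (rotate n G) \<and> rotate n G ! rr (length G) (n mod length G) i = G ! i"
proof -
  have L: "length G > 0" using assms by linarith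
  define k where "k = n mod length G"
  have k: "k < length G" using L by (simp add: k_def)
  have "(n + rr (length G) k i) mod length G = (k + rr (length G) k i) mod length G"
    by (simp add: k_def mod_add_left_eq)
  also have "\<dots> = i"
  proof (cases "k \<le> i")
    case True then show ?thesis using assms by (simp add: rr_def)
  next
    case False
    then have "k + rr (length G) k i = i + length G" using k by (simp add: rr_def)
    then show ?thesis using assms by simp
  qed
  finally have e: "(n + rr (length G) k i) mod length G = i" .
  have lt: "rr (length G) k i < length G" using assms k by (auto simp: rr_def)
  show ?thesis using nth_rotate[OF lt, of n] e lt by (simp add: k_def)
qed

lemma kap_rotate:
  assumes wf: "gauss_wf G" "gauss_wf (rotate n G)"
    and c: "c \<in> labels G" and d: "d \<in> labels G"
  shows "kap (rotate n G) d c = kap G d c"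
proof -
  have L: "length G > 0" using c by (auto simp: labels_def)
  define k where "k = n mod length G"
  have k: "k < length G" using L by (simp add: k_def)
  have s_ok: "\<And>i. i < length G \<Longrightarrow> rr (length G) k i < length (rotate n G) \<and> rotate n G ! rr (length G) k i = G ! i"
    using rr_nth unfolding k_def by blast
  have pmc: "tailpos (rotate n G) c = rr (length G) k (tailpos G c)" "headpos (rotate n G) c = rr (length G) k (headpos G c)"
    by (simp_all add: pos_map[OF wf s_ok c])
  have pmd: "tailpos (rotate n G) d = rr (length G) k (tailpos G d)" "headpos (rotate n G) d = rr (length G) k (headpos G d)"
    by (simp_all add: pos_map[OF wf s_ok d])
  note pc = wf_pos[OF wf(1) c] and pd = wf_pos[OF wf(1) d]
  show ?thesis
    unfolding kap_def pmc pmd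
    apply (rule kappos_cyc_transfer)
    using cyc_rr[OF _ _ _ k] rr_inj[OF _ _ k] pc pd by simp_all
qed

lemma labels_append[simp]: "labels (xs @ ys) = labels xs \<union> labels ys"
  by (auto simp: labels_def)
lemma labels_Cons[simp]: "labels (x # xs) = insert (fst x) (labels xs)"
  by (auto simp: labels_def)
lemma labels_Nil[simp]: "labels [] = {}"
  by (auto simp: labels_def)

lemma move_rotate:
  assumes wf: "gauss_wf G" "gauss_wf (rotate n G)"
  shows "FK (rotate n G) = FK G"
proof -
  have L: "labels (rotate n G) = labels G" by (simp add: labels_def)
  have w: "wsign (rotate n G) c = wsign G c" if c: "c \<in> labels G" for c
    using pos_map(3)[where s = "rr (length G) (n mod length G)", OF wf rr_nth c] by simp
  have k: "kap (rotate n G) d c = kap G d c" if "c \<in> labels G" "d \<in> labels G" for c d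
    using kap_rotate[OF wf that] .
  show ?thesis
    by (rule FK_cong[OF L w ind_gfun_cong(2)[OF L w k]]) auto
qed

lemma move_relabel:
  assumes wf: "gauss_wf G" "gauss_wf G'" and G': "G' = map (\<lambda>(c, ov, e). (f c, ov, e)) G"
    and inj: "inj_on f (labels G)"
  shows "FK G' = FK G"
proof
  fix X
  have len: "length G' = length G" using G' by simp
  have nth: "G' ! i = (f (fst (G ! i)), fst (snd (G ! i)), snd (snd (G ! i)))" if "i < length G" for i
    using that G' by (simp add: case_prod_beta)
  have L: "labels G' = f ` labels G" using G' by (force simp: labels_def case_prod_beta)
  have pos: "tailpos G' (f c) = tailpos G c \<and> headpos G' (f c) = headpos G c \<and> wsign G' (f c) = wsign G c"
    if c: "c \<in> labels G" for c
  proof -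
    note p = wf_pos[OF wf(1) c]
    have t: "tailpos G' (f c) = tailpos G c"
      by (rule tailpos_eq[OF wf(2), of _ _ "wsign G c"]) (use p nth len in auto)
    have h: "headpos G' (f c) = headpos G c"
      by (rule headpos_eq[OF wf(2), of _ _ "wsign G c"]) (use p nth len in auto)
    have "wsign G' (f c) = wsign G c" unfolding wsign_def t using p nth by (simp add: wsign_def)
    then show ?thesis using t h by simp
  qed
  have k: "kap G' (f d) (f c) = kap G d c" if "c \<in> labels G" "d \<in> labels G" for c d
    using pos[OF that(1)] pos[OF that(2)] by (simp add: kap_def)
  have ind: "ind G' (f c) = ind G c" if c: "c \<in> labels G" for c
    unfolding ind_kap L sum.reindex[OF inj] using k c pos by (auto intro!: sum.cong)
  have g: "gfun G' (f c) = gfun G c" if c: "c \<in> labels G" for c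
    unfolding gfun_kap L sum.reindex[OF inj] using k c pos ind by (auto intro!: sum.cong)
  have wr: "writhe G' = writhe G"
    unfolding writhe_def L sum.reindex[OF inj] using pos by (auto intro!: sum.cong)
  show "FK G' X = FK G X"
    unfolding FK_alt wr L sum.reindex[OF inj] using pos g by (auto intro!: sum.cong)
qed

lemma cyc_adj: "p \<notin> {u, Suc u} \<Longrightarrow> q \<notin> {u, Suc u} \<Longrightarrow> cyc p (Suc u) q = cyc p u q"
  unfolding cyc_def by auto
lemma cyc_u: "cyc u x (Suc u) = False" "x \<notin> {u, Suc u} \<Longrightarrow> cyc (Suc u) x u"
  unfolding cyc_def by auto

lemma kappos_adj0:
  assumes "p \<notin> {u, Suc u}" "q \<notin> {u, Suc u}"
  shows "kappos u (Suc u) p q = 0" "kappos (Suc u) u p q = 0"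
    "kappos p q u (Suc u) = 0" "kappos p q (Suc u) u = 0"
  using assms unfolding kappos_def LRpos_def RLpos_def by (auto simp: cyc_adj cyc_u)

definition adj :: "nat \<Rightarrow> nat \<Rightarrow> bool" where
  "adj u u' \<longleftrightarrow> u' = Suc u \<or> u = Suc u'"

lemma ord_adj1: "adj u u' \<Longrightarrow> x \<noteq> u \<Longrightarrow> x \<noteq> u' \<Longrightarrow> ord_eq x u x u'"
  unfolding adj_def ord_eq_def by auto
lemma ord_adj2: "adj u u' \<Longrightarrow> x \<noteq> u \<Longrightarrow> x \<noteq> u' \<Longrightarrow> ord_eq u x u' x"
  unfolding adj_def ord_eq_def by auto
lemma ord_adj3: "adj u u' \<Longrightarrow> adj v v' \<Longrightarrow> u \<noteq> v \<Longrightarrow> u \<noteq> v' \<Longrightarrow> u' \<noteq> v \<Longrightarrow> u' \<noteq> v' \<Longrightarrow> ord_eq u v u' v'"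
  unfolding adj_def ord_eq_def by auto
lemma ord_refl: "ord_eq p q p q"
  unfolding ord_eq_def by auto

lemma kappos_adj:
  assumes "adj u u'" "adj v v'" "u \<noteq> v" "u \<noteq> v'" "u' \<noteq> v" "u' \<noteq> v'"
    "p \<notin> {u, u', v, v'}" "q \<notin> {u, u', v, v'}"
  shows "kappos u v p q = kappos u' v' p q" "kappos p q u v = kappos p q u' v'"
proof -
  show "kappos u v p q = kappos u' v' p q"
    by (rule kappos_ord_transfer) (use assms in \<open>auto intro: ord_refl ord_adj1 ord_adj2 ord_adj3\<close>)
  show "kappos p q u v = kappos p q u' v'"
    by (rule kappos_ord_transfer) (use assms in \<open>auto intro: ord_refl ord_adj1 ord_adj2 ord_adj3\<close>)
qed

lemma move_omega1:
  assumes wf: "gauss_wf (xs @ ys)" "gauss_wf (xs @ [(a, ov, e), (a, \<not> ov, e)] @ ys)"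
    and a: "a \<notin> labels (xs @ ys)"
  shows "FK (xs @ [(a, ov, e), (a, \<not> ov, e)] @ ys) = FK (xs @ ys)"
proof -
  define G where "G = xs @ ys"
  define G' where "G' = xs @ [(a, ov, e), (a, \<not> ov, e)] @ ys"
  define s where "s = (\<lambda>i. if i < length xs then i else Suc (Suc i))"
  note wf' = wf[folded G_def G'_def]
  have s_ok: "s i < length G' \<and> G' ! s i = G ! i" if "i < length G" for i
  proof (cases "i < length xs")
    case True then show ?thesis using that by (simp add: s_def G_def G'_def nth_append)
  next
    case False
    then have "Suc (Suc i) - length xs = Suc (Suc (i - length xs))" by simp
    then show ?thesis using that False by (simp add: s_def G_def G'_def nth_append)
  qed
  have m: "s i < s j \<longleftrightarrow> i < j" for i j by (auto simp: s_def)
  have L: "labels G' = insert a (labels G)" by (auto simp: G_def G'_def)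
  have a': "a \<notin> labels G" using a by (simp add: G_def)
  have w: "wsign G' c = wsign G c" if "c \<in> labels G" for c by (rule pos_map(3)[OF wf' s_ok that])
  have k: "kap G' d c = kap G d c" if "c \<in> labels G" "d \<in> labels G" for c d
    by (rule kap_map_mono[OF wf' s_ok m that])
  have aG': "a \<in> labels G'" using L by simp
  have ta: "tailpos G' a = length xs + (if ov then 0 else 1)"
    by (rule tailpos_eq[OF wf'(2), of _ _ e]) (auto simp: G'_def nth_append)
  have ha: "headpos G' a = length xs + (if ov then 1 else 0)"
    by (rule headpos_eq[OF wf'(2), of _ _ e]) (auto simp: G'_def nth_append)
  have ka: "kap G' a c = 0 \<and> kap G' c a = 0" if c: "c \<in> labels G" for c
  proof -
    have tc: "tailpos G' c = s (tailpos G c)" and hc: "headpos G' c = s (headpos G c)"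
      using pos_map[OF wf' s_ok c] by simp_all
    have n1: "s (tailpos G c) \<notin> {length xs, Suc (length xs)}" "s (headpos G c) \<notin> {length xs, Suc (length xs)}"
      by (auto simp: s_def)
    show ?thesis unfolding kap_def ta ha tc hc
      using kappos_adj0[OF n1] by (cases ov) simp_all
  qed
  show ?thesis unfolding G_def[symmetric] G'_def[symmetric]
    by (rule omega1_abs[OF L a' w k ka])
qed


lemma omega2_gen:
  assumes wf: "gauss_wf (xs @ ys @ zs)" "gauss_wf (xs @ A @ ys @ B @ zs)"
    and lA: "length A = 2" and lB: "length B = 2"
    and L: "labels (xs @ A @ ys @ B @ zs) = insert a (insert b (labels (xs @ ys @ zs)))"
    and a: "a \<notin> labels (xs @ ys @ zs)" and b: "b \<notin> labels (xs @ ys @ zs)" and ab: "a \<noteq> b"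
    and wab: "wsign (xs @ A @ ys @ B @ zs) b = - wsign (xs @ A @ ys @ B @ zs) a"
    and adjt: "adj (tailpos (xs @ A @ ys @ B @ zs) a) (tailpos (xs @ A @ ys @ B @ zs) b)"
    and adjh: "adj (headpos (xs @ A @ ys @ B @ zs) a) (headpos (xs @ A @ ys @ B @ zs) b)"
    and inP: "\<And>c. c \<in> {a, b} \<Longrightarrow> tailpos (xs @ A @ ys @ B @ zs) c \<in> {length xs, Suc (length xs), length xs + 2 + length ys, Suc (length xs + 2 + length ys)} \<and>
                    headpos (xs @ A @ ys @ B @ zs) c \<in> {length xs, Suc (length xs), length xs + 2 + length ys, Suc (length xs + 2 + length ys)}"
  shows "FK (xs @ A @ ys @ B @ zs) = FK (xs @ ys @ zs)"
proof -
  define G where "G = xs @ ys @ zs"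
  define G' where "G' = xs @ A @ ys @ B @ zs"
  define s where "s = (\<lambda>i. if i < length xs then i else if i < length xs + length ys then Suc (Suc i) else i + 4)"
  note wf' = wf[folded G_def G'_def]
  obtain a1 a2 where A: "A = [a1, a2]" using lA by (metis (no_types, lifting) One_nat_def Suc_1 length_0_conv length_Suc_conv)
  obtain b1 b2 where B: "B = [b1, b2]" using lB by (metis (no_types, lifting) One_nat_def Suc_1 length_0_conv length_Suc_conv)
  have s_ok: "s i < length G' \<and> G' ! s i = G ! i" if "i < length G" for i
  proof -
    consider "i < length xs" | "length xs \<le> i" "i < length xs + length ys" | "length xs + length ys \<le> i"
      by linarith
    then show ?thesis
    proof cases
      case 1 then show ?thesis using that by (simp add: s_def G_def G'_def nth_append)
    next
      case 2
      then have "Suc (Suc i) - length xs = Suc (Suc (i - length xs))" "i - length xs < length ys" by simp_all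
      then show ?thesis using that 2 by (simp add: s_def G_def G'_def nth_append A B)
    next
      case 3
      then have "i + 4 - length xs = Suc (Suc (Suc (Suc (i - length xs))))" by simp
      moreover have "i - length xs - length ys = i - (length xs + length ys)" "\<not> i - length xs < length ys" using 3 by simp_all
      ultimately show ?thesis using that 3 by (simp add: s_def G_def G'_def nth_append A B)
    qed
  qed
  have m: "s i < s j \<longleftrightarrow> i < j" for i j by (auto simp: s_def)
  have a': "a \<notin> labels G" "b \<notin> labels G" using a b by (simp_all add: G_def)
  have w: "wsign G' c = wsign G c" if "c \<in> labels G" for c by (rule pos_map(3)[OF wf' s_ok that])
  have k: "kap G' d c = kap G d c" if "c \<in> labels G" "d \<in> labels G" for c d
    by (rule kap_map_mono[OF wf' s_ok m that])
  have L': "labels G' = insert a (insert b (labels G))" using L by (simp add: G_def G'_def)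
  have aG: "a \<in> labels G'" "b \<in> labels G'" using L' by auto
  have dab: "distinct [tailpos G' b, headpos G' b, tailpos G' a, headpos G' a]"
    by (rule wf_distinct_pos[OF wf'(2) aG ab])
  have ka: "kap G' a c = kap G' b c \<and> kap G' c a = kap G' c b" if c: "c \<in> labels G" for c
  proof -
    have tc: "tailpos G' c = s (tailpos G c)" and hc: "headpos G' c = s (headpos G c)"
      using pos_map[OF wf' s_ok c] by simp_all
    have n1: "s x \<notin> {length xs, Suc (length xs), length xs + 2 + length ys, Suc (length xs + 2 + length ys)}" for x
      by (auto simp: s_def)
    have ia: "tailpos G' a \<in> {length xs, Suc (length xs), length xs + 2 + length ys, Suc (length xs + 2 + length ys)}"
       "tailpos G' b \<in> {length xs, Suc (length xs), length xs + 2 + length ys, Suc (length xs + 2 + length ys)}"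
       "headpos G' a \<in> {length xs, Suc (length xs), length xs + 2 + length ys, Suc (length xs + 2 + length ys)}"
       "headpos G' b \<in> {length xs, Suc (length xs), length xs + 2 + length ys, Suc (length xs + 2 + length ys)}"
      using inP[folded G'_def] by auto
    have nn: "p \<notin> {tailpos G' a, tailpos G' b, headpos G' a, headpos G' b}" if "p \<in> {s (tailpos G c), s (headpos G c)}" for p
    proof -
      have "p \<notin> {length xs, Suc (length xs), length xs + 2 + length ys, Suc (length xs + 2 + length ys)}"
        using that n1[of "tailpos G c"] n1[of "headpos G c"] by (elim insertE) auto
      then show ?thesis using ia by (metis insertE singletonD)
    qed
    note KA = kappos_adj[OF adjt[folded G'_def] adjh[folded G'_def] _ _ _ _ nn nn]
    show ?thesis unfolding kap_def tc hc
      using KA dab by simp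
  qed
  show ?thesis unfolding G_def[symmetric] G'_def[symmetric]
    by (rule omega2_abs[OF wf'(2) L' a' ab wab[folded G'_def] w k ka])
qed

lemma move_omega2:
  assumes wf: "gauss_wf (xs @ ys @ zs)" "gauss_wf (xs @ P @ ys @ Q @ zs)"
    and a: "a \<notin> labels (xs @ ys @ zs)" and b: "b \<notin> labels (xs @ ys @ zs)" and ab: "a \<noteq> b"
    and Q: "Q \<in> {[(a, False, e), (b, False, -e)], [(b, False, -e), (a, False, e)]}"
    and P: "P = [(a, True, e), (b, True, -e)]"
  shows "FK (xs @ P @ ys @ Q @ zs) = FK (xs @ ys @ zs)"
proof -
  define G' where "G' = xs @ P @ ys @ Q @ zs"
  note wf' = wf(2)[folded G'_def]
  have ta: "tailpos G' a = length xs"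
    by (rule tailpos_eq[OF wf', of _ _ e]) (auto simp: G'_def nth_append P)
  have tb: "tailpos G' b = Suc (length xs)"
    by (rule tailpos_eq[OF wf', of _ _ "-e"]) (auto simp: G'_def nth_append P)
  have wa: "wsign G' a = e" using ta by (simp add: wsign_def G'_def nth_append P)
  have wb: "wsign G' b = - e" using tb by (simp add: wsign_def G'_def nth_append P)
  have hab: "headpos G' a = length xs + 2 + length ys \<and> headpos G' b = Suc (length xs + 2 + length ys) \<or>
        headpos G' b = length xs + 2 + length ys \<and> headpos G' a = Suc (length xs + 2 + length ys)"
  proof (cases "Q = [(a, False, e), (b, False, -e)]")
    case True
    have "headpos G' a = length xs + 2 + length ys"
      by (rule headpos_eq[OF wf', of _ _ e]) (auto simp: G'_def nth_append P True)
    moreover have "headpos G' b = Suc (length xs + 2 + length ys)"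
      by (rule headpos_eq[OF wf', of _ _ "-e"]) (auto simp: G'_def nth_append P True)
    ultimately show ?thesis by simp
  next
    case False
    then have Q2: "Q = [(b, False, -e), (a, False, e)]" using Q by simp
    have "headpos G' b = length xs + 2 + length ys"
      by (rule headpos_eq[OF wf', of _ _ "-e"]) (auto simp: G'_def nth_append P Q2)
    moreover have "headpos G' a = Suc (length xs + 2 + length ys)"
      by (rule headpos_eq[OF wf', of _ _ e]) (auto simp: G'_def nth_append P Q2)
    ultimately show ?thesis by simp
  qed
  have "FK G' = FK (xs @ ys @ zs)"
  proof (rule omega2_gen[OF wf _ _ _ a b ab, folded G'_def])
    show "length P = 2" "length Q = 2" using P Q by auto
    show "labels G' = insert a (insert b (labels (xs @ ys @ zs)))"
      using P Q by (auto simp: G'_def)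
    show "wsign G' b = - wsign G' a" using wa wb by simp
    show "adj (tailpos G' a) (tailpos G' b)" using ta tb by (simp add: adj_def)
    show "adj (headpos G' a) (headpos G' b)" using hab by (auto simp: adj_def)
    show "\<And>c. c \<in> {a, b} \<Longrightarrow> tailpos G' c \<in> {length xs, Suc (length xs), length xs + 2 + length ys, Suc (length xs + 2 + length ys)} \<and>
                    headpos G' c \<in> {length xs, Suc (length xs), length xs + 2 + length ys, Suc (length xs + 2 + length ys)}"
      using ta tb hab by auto
  qed
  then show ?thesis by (simp add: G'_def)
qed


lemma move_omega2':
  assumes wf: "gauss_wf (xs @ ys @ zs)" "gauss_wf (xs @ Q @ ys @ P @ zs)"
    and a: "a \<notin> labels (xs @ ys @ zs)" and b: "b \<notin> labels (xs @ ys @ zs)" and ab: "a \<noteq> b"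
    and Q: "Q \<in> {[(a, False, e), (b, False, -e)], [(b, False, -e), (a, False, e)]}"
    and P: "P = [(a, True, e), (b, True, -e)]"
  shows "FK (xs @ Q @ ys @ P @ zs) = FK (xs @ ys @ zs)"
proof -
  define G' where "G' = xs @ Q @ ys @ P @ zs"
  note wf' = wf(2)[folded G'_def]
  have lQ: "length Q = 2" using Q by auto
  have ta: "tailpos G' a = length xs + 2 + length ys"
    by (rule tailpos_eq[OF wf', of _ _ e]) (auto simp: G'_def nth_append P lQ)
  have tb: "tailpos G' b = Suc (length xs + 2 + length ys)"
    by (rule tailpos_eq[OF wf', of _ _ "-e"]) (auto simp: G'_def nth_append P lQ)
  have wa: "wsign G' a = e" using ta by (simp add: wsign_def G'_def nth_append P lQ)
  have wb: "wsign G' b = - e" using tb by (simp add: wsign_def G'_def nth_append P lQ)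
  have hab: "headpos G' a = length xs \<and> headpos G' b = Suc (length xs) \<or>
        headpos G' b = length xs \<and> headpos G' a = Suc (length xs)"
  proof (cases "Q = [(a, False, e), (b, False, -e)]")
    case True
    have "headpos G' a = length xs"
      by (rule headpos_eq[OF wf', of _ _ e]) (auto simp: G'_def nth_append P True)
    moreover have "headpos G' b = Suc (length xs)"
      by (rule headpos_eq[OF wf', of _ _ "-e"]) (auto simp: G'_def nth_append P True)
    ultimately show ?thesis by simp
  next
    case False
    then have Q2: "Q = [(b, False, -e), (a, False, e)]" using Q by simp
    have "headpos G' b = length xs"
      by (rule headpos_eq[OF wf', of _ _ "-e"]) (auto simp: G'_def nth_append P Q2)
    moreover have "headpos G' a = Suc (length xs)"
      by (rule headpos_eq[OF wf', of _ _ e]) (auto simp: G'_def nth_append P Q2)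
    ultimately show ?thesis by simp
  qed
  have "FK G' = FK (xs @ ys @ zs)"
  proof (rule omega2_gen[OF wf _ _ _ a b ab, folded G'_def])
    show "length Q = 2" "length P = 2" using P Q by auto
    show "labels G' = insert a (insert b (labels (xs @ ys @ zs)))"
      using P Q by (auto simp: G'_def)
    show "wsign G' b = - wsign G' a" using wa wb by simp
    show "adj (tailpos G' a) (tailpos G' b)" using ta tb by (simp add: adj_def)
    show "adj (headpos G' a) (headpos G' b)" using hab by (auto simp: adj_def)
    show "\<And>c. c \<in> {a, b} \<Longrightarrow> tailpos G' c \<in> {length xs, Suc (length xs), length xs + 2 + length ys, Suc (length xs + 2 + length ys)} \<and>
                    headpos G' c \<in> {length xs, Suc (length xs), length xs + 2 + length ys, Suc (length xs + 2 + length ys)}"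
      using ta tb hab by auto
  qed
  then show ?thesis by (simp add: G'_def)
qed

definition b2n :: "bool \<Rightarrow> nat" where "b2n b = (if b then 1 else 0)"

definition tri_t :: "nat \<Rightarrow> nat \<Rightarrow> nat \<Rightarrow> bool \<Rightarrow> bool \<Rightarrow> bool \<Rightarrow> nat \<Rightarrow> nat" where
  "tri_t qT qM qB oT oM oB j = (if j = 0 then qT + b2n (\<not> oT) else if j = 1 then qT + b2n oT else qM + b2n oM)"
definition tri_h :: "nat \<Rightarrow> nat \<Rightarrow> nat \<Rightarrow> bool \<Rightarrow> bool \<Rightarrow> bool \<Rightarrow> nat \<Rightarrow> nat" where
  "tri_h qT qM qB oT oM oB j = (if j = 0 then qM + b2n (\<not> oM) else if j = 1 then qB + b2n (\<not> oB) else qB + b2n oB)"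
definition Kt :: "nat \<Rightarrow> nat \<Rightarrow> nat \<Rightarrow> bool \<Rightarrow> bool \<Rightarrow> bool \<Rightarrow> nat \<Rightarrow> nat \<Rightarrow> int" where
  "Kt qT qM qB oT oM oB d c = kappos (tri_t qT qM qB oT oM oB d) (tri_h qT qM qB oT oM oB d)
       (tri_t qT qM qB oT oM oB c) (tri_h qT qM qB oT oM oB c)"

lemma ey_ez: "r3_ok ex ey ez oT oM oB \<Longrightarrow> ey = ex * bsgn oM * bsgn oB \<and> ez = ex * bsgn oT * bsgn oB \<and> ex \<in> {1,-1}"
  unfolding r3_ok_def bsgn_def by auto


lemmas Kt_simps = Kt_def tri_t_def tri_h_def b2n_def kappos_def LRpos_def RLpos_def cyc_def

lemma T12_canon:
  assumes q: "(qT, qM, qB) \<in> {(0,2,4),(0,4,2),(2,0,4),(2,4,0),(4,0,2),(4,2,0)}"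
    and r: "r3_ok ex ey ez oT oM oB"
  defines "K \<equiv> Kt qT qM qB oT oM oB" and "K' \<equiv> Kt qT qM qB (\<not>oT) (\<not>oM) (\<not>oB)"
  shows "\<forall>c\<in>{0,1,2}. ex * K 0 c + ey * K 1 c + ez * K 2 c = ex * K' 0 c + ey * K' 1 c + ez * K' 2 c"
    "ex * K 0 1 + ey * K 1 1 + ez * K 2 1 = (ex * K 0 0 + ey * K 1 0 + ez * K 2 0) + (ex * K 0 2 + ey * K 1 2 + ez * K 2 2)"
  using q ey_ez[OF r] unfolding K_def K'_def
  by (elim insertE singletonE emptyE conjE; cases oT; cases oM; cases oB; simp add: Kt_simps bsgn_def)+


lemma phi_dvd: "m dvd (u - v) \<Longrightarrow> phi (nat \<bar>m\<bar>) u = phi (nat \<bar>m\<bar>) v"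
  unfolding phi_def by (auto simp: mod_eq_dvd_iff)

lemma phi_rule0: fixes A B :: int shows "phi (nat \<bar>A\<bar>) (A + B) = phi (nat \<bar>A\<bar>) (B)"
  by (rule phi_dvd) (simp add: algebra_simps)
lemma phi_rule1: fixes A B :: int shows "phi (nat \<bar>A\<bar>) (- A - B) = phi (nat \<bar>A\<bar>) (- B)"
  by (rule phi_dvd) (simp add: algebra_simps)
lemma phi_rule2: fixes A B :: int shows "phi (nat \<bar>B\<bar>) (A + B) = phi (nat \<bar>B\<bar>) (A)"
  by (rule phi_dvd) (simp add: algebra_simps)
lemma phi_rule3: fixes A B :: int shows "phi (nat \<bar>B\<bar>) (- A - B) = phi (nat \<bar>B\<bar>) (- A)"
  by (rule phi_dvd) (simp add: algebra_simps)
lemma phi_rule4: fixes A B :: int shows "phi (nat \<bar>A + B\<bar>) (B) = phi (nat \<bar>A + B\<bar>) (- A)"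
  by (rule phi_dvd) (simp add: algebra_simps)
lemma phi_rule5: fixes A B :: int shows "phi (nat \<bar>A + B\<bar>) (- B) = phi (nat \<bar>A + B\<bar>) (A)"
proof (rule phi_dvd)
  have "- B - A = - (A + B)" by simp
  then show "A + B dvd - B - A" by (simp only: dvd_minus_iff dvd_refl)
qed
lemmas phi_rules = phi_rule0 phi_rule1 phi_rule2 phi_rule3 phi_rule4 phi_rule5

lemma T3_canon:
  fixes A B ex ey ez :: int
  assumes q: "(qT, qM, qB) \<in> {(0,2,4),(0,4,2),(2,0,4),(2,4,0),(4,0,2),(4,2,0)}"
    and r: "r3_ok ex ey ez oT oM oB" and c: "c \<in> {0,1,2}"
  defines "K \<equiv> Kt qT qM qB oT oM oB" and "K' \<equiv> Kt qT qM qB (\<not>oT) (\<not>oM) (\<not>oB)"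
  defines "I \<equiv> (\<lambda>j::nat. if j = 0 then A else if j = 1 then A + B else B)"
  shows "Poly_Mapping.single (phi (nat \<bar>I c\<bar>) (K 0 c * A)) (K 0 c * ex)
       + Poly_Mapping.single (phi (nat \<bar>I c\<bar>) (K 1 c * (A + B))) (K 1 c * ey)
       + Poly_Mapping.single (phi (nat \<bar>I c\<bar>) (K 2 c * B)) (K 2 c * ez)
     = Poly_Mapping.single (phi (nat \<bar>I c\<bar>) (K' 0 c * A)) (K' 0 c * ex)
       + Poly_Mapping.single (phi (nat \<bar>I c\<bar>) (K' 1 c * (A + B))) (K' 1 c * ey)
       + Poly_Mapping.single (phi (nat \<bar>I c\<bar>) (K' 2 c * B)) (K' 2 c * ez)"
  using q ey_ez[OF r] c unfolding K_def K'_def I_def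
  by (elim insertE singletonE emptyE conjE; cases oT; cases oM; cases oB; simp add: Kt_simps bsgn_def phi_rules single_uminus)+

definition far :: "nat \<Rightarrow> nat \<Rightarrow> bool" where "far u v \<longleftrightarrow> Suc u < v \<or> Suc v < u"

lemma Kt_g:
  assumes m: "\<And>i j. g i < g j \<longleftrightarrow> i < j"
    and gv: "\<And>b. b \<le> 1 \<Longrightarrow> g (cT + b) = qT + b \<and> g (cM + b) = qM + b \<and> g (cB + b) = qB + b"
  shows "Kt qT qM qB oT oM oB d c = Kt cT cM cB oT oM oB d c"
proof -
  have b: "b2n x \<le> 1" for x by (simp add: b2n_def)
  have t: "tri_t qT qM qB oT oM oB j = g (tri_t cT cM cB oT oM oB j)" for j
    using gv[OF b] by (simp add: tri_t_def)
  have h: "tri_h qT qM qB oT oM oB j = g (tri_h cT cM cB oT oM oB j)" for j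
    using gv[OF b] by (simp add: tri_h_def)
  show ?thesis unfolding Kt_def t h by (rule kappos_mono[OF m])
qed

definition g3 :: "nat \<Rightarrow> nat \<Rightarrow> nat \<Rightarrow> nat \<Rightarrow> nat" where
  "g3 s1 s2 s3 i = (if i < 2 then s1 + i else if i < 4 then s2 + (i - 2) else s3 + (i - 4))"

lemma g3_mono: "Suc s1 < s2 \<Longrightarrow> Suc s2 < s3 \<Longrightarrow> g3 s1 s2 s3 i < g3 s1 s2 s3 j \<longleftrightarrow> i < j"
  unfolding g3_def by auto

lemma g3_val: "b \<le> 1 \<Longrightarrow> g3 s1 s2 s3 (0 + b) = s1 + b \<and> g3 s1 s2 s3 (2 + b) = s2 + b \<and> g3 s1 s2 s3 (4 + b) = s3 + b"
  unfolding g3_def by auto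

lemma Kt_lift:
  assumes f: "far qT qM" "far qT qB" "far qM qB"
  shows "\<exists>cT cM cB. (cT, cM, cB) \<in> {(0,2,4),(0,4,2),(2,0,4),(2,4,0),(4,0,2),(4,2,0)} \<and>
     (\<forall>oT oM oB d c. Kt qT qM qB oT oM oB d c = Kt cT cM cB oT oM oB d c)"
proof -
  have "(Suc qT < qM \<and> Suc qM < qB) \<or> (Suc qT < qB \<and> Suc qB < qM) \<or> (Suc qM < qT \<and> Suc qT < qB) \<or>
        (Suc qM < qB \<and> Suc qB < qT) \<or> (Suc qB < qT \<and> Suc qT < qM) \<or> (Suc qB < qM \<and> Suc qM < qT)"
    using f unfolding far_def by linarith
  then show ?thesis
  proof (elim disjE conjE)
    assume a: "Suc qT < qM" "Suc qM < qB"
    show ?thesis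
      by (rule exI[of _ 0], rule exI[of _ 2], rule exI[of _ 4], simp,
          intro allI, rule Kt_g[OF g3_mono[OF a]], use g3_val in simp)
  next
    assume a: "Suc qT < qB" "Suc qB < qM"
    show ?thesis
      by (rule exI[of _ 0], rule exI[of _ 4], rule exI[of _ 2], simp,
          intro allI, rule Kt_g[OF g3_mono[OF a]], use g3_val in simp)
  next
    assume a: "Suc qM < qT" "Suc qT < qB"
    show ?thesis
      by (rule exI[of _ 2], rule exI[of _ 0], rule exI[of _ 4], simp,
          intro allI, rule Kt_g[OF g3_mono[OF a]], use g3_val in simp)
  next
    assume a: "Suc qM < qB" "Suc qB < qT"
    show ?thesis
      by (rule exI[of _ 4], rule exI[of _ 0], rule exI[of _ 2], simp,
          intro allI, rule Kt_g[OF g3_mono[OF a]], use g3_val in simp)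
  next
    assume a: "Suc qB < qT" "Suc qT < qM"
    show ?thesis
      by (rule exI[of _ 2], rule exI[of _ 4], rule exI[of _ 0], simp,
          intro allI, rule Kt_g[OF g3_mono[OF a]], use g3_val in simp)
  next
    assume a: "Suc qB < qM" "Suc qM < qT"
    show ?thesis
      by (rule exI[of _ 4], rule exI[of _ 2], rule exI[of _ 0], simp,
          intro allI, rule Kt_g[OF g3_mono[OF a]], use g3_val in simp)
  qed
qed

lemma kappos_R: "i \<notin> {p, q} \<Longrightarrow> j \<notin> {p, q} \<Longrightarrow> kappos i j p q = of_bool (cyc p j q) - of_bool (cyc p i q)"
  unfolding kappos_def LRpos_def RLpos_def by auto

lemma cyc_block: "k \<notin> {p, Suc p, q, Suc q} \<Longrightarrow> far p q \<Longrightarrow> i \<le> 1 \<Longrightarrow> j \<le> 1 \<Longrightarrow> cyc (p + i) k (q + j) = cyc p k q"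
  unfolding cyc_def far_def by auto

lemma cyc3: "distinct [qT, qM, qB] \<Longrightarrow> k \<notin> {qT, qM, qB} \<Longrightarrow>
   (of_bool (cyc qT k qM) + of_bool (cyc qM k qB) - of_bool (cyc qT k qB) :: int) = (if cyc qT qM qB then 0 else 1)"
  unfolding cyc_def by auto

lemma R_rel:
  fixes oT oM oB :: bool
  assumes f: "far qT qM" "far qT qB" "far qM qB"
    and k: "k \<notin> {qT, Suc qT, qM, Suc qM, qB, Suc qB}"
  defines "t \<equiv> tri_t qT qM qB oT oM oB" and "h \<equiv> tri_h qT qM qB oT oM oB"
  shows "(of_bool (cyc (t 0) k (h 0)) + of_bool (cyc (t 2) k (h 2)) - of_bool (cyc (t 1) k (h 1)) :: int)
     = (if cyc qT qM qB then 0 else 1)"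
proof -
  have b: "b2n x \<le> 1" for x by (simp add: b2n_def)
  have fs: "far qM qT" "far qB qT" "far qB qM" using f by (auto simp: far_def)
  have "cyc (t 0) k (h 0) = cyc qT k qM" unfolding t_def h_def tri_t_def tri_h_def
    by (simp, rule cyc_block[OF _ f(1) b b]) (use k in auto)
  moreover have "cyc (t 2) k (h 2) = cyc qM k qB" unfolding t_def h_def tri_t_def tri_h_def
    by (simp, rule cyc_block[OF _ f(3) b b]) (use k in auto)
  moreover have "cyc (t 1) k (h 1) = cyc qT k qB" unfolding t_def h_def tri_t_def tri_h_def
    by (simp, rule cyc_block[OF _ f(2) b b]) (use k in auto)
  moreover have "distinct [qT, qM, qB]" using f by (auto simp: far_def)
  moreover have "k \<notin> {qT, qM, qB}" using k by auto
  ultimately show ?thesis using cyc3 by simp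
qed

definition sig :: "nat set \<Rightarrow> nat \<Rightarrow> nat" where
  "sig S i = (if i \<in> S then Suc i else if i \<noteq> 0 \<and> i - 1 \<in> S then i - 1 else i)"

definition fars :: "nat set \<Rightarrow> bool" where
  "fars S \<longleftrightarrow> (\<forall>p\<in>S. \<forall>q\<in>S. p \<noteq> q \<longrightarrow> far p q)"

lemma sig_in:
  assumes "fars S" "q \<in> S"
  shows "sig S q = Suc q" "sig S (Suc q) = q"
proof -
  show "sig S q = Suc q" using assms by (simp add: sig_def)
  have "Suc q \<notin> S" using assms unfolding fars_def far_def by force
  then show "sig S (Suc q) = q" using assms by (simp add: sig_def)
qed

lemma sig_out:
  assumes "\<And>q. q \<in> S \<Longrightarrow> u \<notin> {q, Suc q}"
  shows "sig S u = u"
proof -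
  have "u \<notin> S" using assms by blast
  moreover have "\<not> (u \<noteq> 0 \<and> u - 1 \<in> S)"
  proof
    assume "u \<noteq> 0 \<and> u - 1 \<in> S"
    then have "u \<in> {u - 1, Suc (u - 1)}" by simp
    then show False using assms \<open>u \<noteq> 0 \<and> u - 1 \<in> S\<close> by blast
  qed
  ultimately show ?thesis unfolding sig_def by auto
qed

lemma sig_blk:
  assumes "fars S" "q \<in> S" "u \<in> {q, Suc q}"
  shows "sig S u \<in> {q, Suc q}"
  using assms sig_in[OF assms(1,2)] by auto

lemma sig_invol:
  assumes "fars S"
  shows "sig S (sig S i) = i"
proof (cases "\<exists>q\<in>S. i \<in> {q, Suc q}")
  case True
  then obtain q where "q \<in> S" "i \<in> {q, Suc q}" by blast
  then show ?thesis using sig_in[OF assms] by auto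
next
  case False
  then show ?thesis using sig_out[of S i] by auto
qed

lemma ord_eq_refl: "ord_eq u v u v" by (simp add: ord_eq_def)

lemma ord_eq_b1: "u \<in> {q, Suc q} \<Longrightarrow> u' \<in> {q, Suc q} \<Longrightarrow> v \<notin> {q, Suc q} \<Longrightarrow> ord_eq u v u' v"
  by (auto simp: ord_eq_def)

lemma ord_eq_b2: "u \<in> {q, Suc q} \<Longrightarrow> u' \<in> {q, Suc q} \<Longrightarrow> v \<in> {p, Suc p} \<Longrightarrow> v' \<in> {p, Suc p} \<Longrightarrow> far q p \<Longrightarrow> ord_eq u v u' v'"
  by (auto simp: ord_eq_def far_def)

lemma sig_ord:
  assumes F: "fars S"
    and nb: "\<And>q. q \<in> S \<Longrightarrow> u \<in> {q, Suc q} \<Longrightarrow> v \<in> {q, Suc q} \<Longrightarrow> u = v"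
  shows "ord_eq u v (sig S u) (sig S v)"
proof (cases "u = v")
  case True then show ?thesis by (simp add: ord_eq_def)
next
  case uv: False
  show ?thesis
  proof (cases "\<exists>q\<in>S. u \<in> {q, Suc q}")
    case True
    then obtain q where q: "q \<in> S" "u \<in> {q, Suc q}" by blast
    have su: "sig S u \<in> {q, Suc q}" by (rule sig_blk[OF F q])
    have vq: "v \<notin> {q, Suc q}" using nb[OF q] uv by blast
    show ?thesis
    proof (cases "\<exists>p\<in>S. v \<in> {p, Suc p}")
      case True
      then obtain p where p: "p \<in> S" "v \<in> {p, Suc p}" by blast
      have sv: "sig S v \<in> {p, Suc p}" by (rule sig_blk[OF F p])
      have "p \<noteq> q" using vq p by auto
      then have "far q p" using F q p unfolding fars_def by auto
      then show ?thesis by (rule ord_eq_b2[OF q(2) su p(2) sv])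
    next
      case False
      then have "sig S v = v" using sig_out[of S v] by blast
      then show ?thesis using ord_eq_b1[OF q(2) su vq] by simp
    qed
  next
    case False
    then have su: "sig S u = u" using sig_out[of S u] by blast
    show ?thesis
    proof (cases "\<exists>p\<in>S. v \<in> {p, Suc p}")
      case True
      then obtain p where p: "p \<in> S" "v \<in> {p, Suc p}" by blast
      have sv: "sig S v \<in> {p, Suc p}" by (rule sig_blk[OF F p])
      have "u \<notin> {p, Suc p}" using False p by blast
      then show ?thesis using ord_eq_sym[OF ord_eq_b1[OF p(2) sv]] su by simp
    next
      case False
      then have "sig S v = v" using sig_out[of S v] by blast
      then show ?thesis using su by (simp add: ord_eq_def)
    qed
  qed
qed

definition ch3 :: "nat \<Rightarrow> nat \<Rightarrow> nat \<Rightarrow> nat \<Rightarrow> nat" where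
  "ch3 x y z j = (if j = 0 then x else if j = 1 then y else z)"
definition w3 :: "int \<Rightarrow> int \<Rightarrow> int \<Rightarrow> nat \<Rightarrow> int" where
  "w3 x y z j = (if j = 0 then x else if j = 1 then y else z)"

lemma blk_unique: "far p q \<Longrightarrow> u \<in> {p, Suc p} \<Longrightarrow> u \<in> {q, Suc q} \<Longrightarrow> False"
  by (auto simp: far_def)

lemma b2n_le: "b2n b \<le> 1" by (simp add: b2n_def)

lemma tri_blk:
  "tri_t qT qM qB oT oM oB 0 \<in> {qT, Suc qT}" "tri_h qT qM qB oT oM oB 0 \<in> {qM, Suc qM}"
  "tri_t qT qM qB oT oM oB 1 \<in> {qT, Suc qT}" "tri_h qT qM qB oT oM oB 1 \<in> {qB, Suc qB}"
  "tri_t qT qM qB oT oM oB 2 \<in> {qM, Suc qM}" "tri_h qT qM qB oT oM oB 2 \<in> {qB, Suc qB}"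
  by (simp_all add: tri_t_def tri_h_def b2n_def)

lemma j3: "j < (3::nat) \<longleftrightarrow> j = 0 \<or> j = 1 \<or> j = 2" by auto

lemma tri_diff_blk:
  assumes f: "far qT qM" "far qT qB" "far qM qB" and j: "j < 3" and q: "q \<in> {qT, qM, qB}"
    and a: "tri_t qT qM qB oT oM oB j \<in> {q, Suc q}" and b: "tri_h qT qM qB oT oM oB j \<in> {q, Suc q}"
  shows False
proof -
  have fs: "far qM qT" "far qB qT" "far qB qM" using f by (auto simp: far_def)
  have ne: "qT \<noteq> qM" "qT \<noteq> qB" "qM \<noteq> qB" using f by (auto simp: far_def)
  note tb = tri_blk[of qT qM qB oT oM oB]
  have far_or: "p = q' \<or> far p q'" if "p \<in> {qT, qM, qB}" "q' \<in> {qT, qM, qB}" for p q'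
    using that f fs by auto
  from j consider "j = 0" | "j = 1" | "j = 2" by linarith
  then show False
  proof cases
    case 1
    have "q = qT" using far_or[of qT q] q a tb(1) blk_unique 1 by auto
    moreover have "q = qM" using far_or[of qM q] q b tb(2) blk_unique 1 by auto
    ultimately show False using ne by simp
  next
    case 2
    have "q = qT" using far_or[of qT q] q a tb(3) blk_unique 2 by auto
    moreover have "q = qB" using far_or[of qB q] q b tb(4) blk_unique 2 by auto
    ultimately show False using ne by simp
  next
    case 3
    have "q = qM" using far_or[of qM q] q a tb(5) blk_unique 3 by auto
    moreover have "q = qB" using far_or[of qB q] q b tb(6) blk_unique 3 by auto
    ultimately show False using ne by simp
  qed
qed

lemma blk_cover:
  assumes q: "q \<in> {qT, qM, qB}" and i: "i \<in> {q, Suc q}"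
  shows "\<exists>j<3. i = tri_t qT qM qB oT oM oB j \<or> i = tri_h qT qM qB oT oM oB j"
proof -
  have "i \<in> {tri_t qT qM qB oT oM oB 0, tri_t qT qM qB oT oM oB 1, tri_t qT qM qB oT oM oB 2,
              tri_h qT qM qB oT oM oB 0, tri_h qT qM qB oT oM oB 1, tri_h qT qM qB oT oM oB 2}"
    using q i by (cases oT; cases oM; cases oB; auto simp: tri_t_def tri_h_def b2n_def)
  then show ?thesis by (metis insertE singletonD zero_less_numeral one_less_numeral_iff semiring_norm(77) numeral_less_iff semiring_norm(76) lessI numeral_2_eq_2 numeral_3_eq_3)
qed

lemma sig_tri:
  assumes F: "fars {qT, qM, qB}" and j: "j < 3"
  shows "sig {qT, qM, qB} (tri_t qT qM qB oT oM oB j) = tri_t qT qM qB (\<not>oT) (\<not>oM) (\<not>oB) j"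
    "sig {qT, qM, qB} (tri_h qT qM qB oT oM oB j) = tri_h qT qM qB (\<not>oT) (\<not>oM) (\<not>oB) j"
  using j sig_in[OF F, of qT] sig_in[OF F, of qM] sig_in[OF F, of qB]
  by (cases oT; cases oM; cases oB; auto simp: tri_t_def tri_h_def b2n_def j3)+


lemma sum3: "distinct [x, y, z] \<Longrightarrow> (\<Sum>d\<in>{x, y, z}. f d) = f x + f y + f z"
  by (simp add: add.assoc)

lemma omega3_core:
  fixes G G' :: gauss
  assumes wf: "gauss_wf G" "gauss_wf G'"
    and f: "far qT qM" "far qT qB" "far qM qB"
    and bl: "Suc qT < length G" "Suc qM < length G" "Suc qB < length G"
    and len: "length G' = length G"
    and sw: "\<And>i. i < length G \<Longrightarrow> G' ! sig {qT, qM, qB} i = G ! i"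
    and pts: "\<And>j. j < 3 \<Longrightarrow> G ! tri_t qT qM qB oT oM oB j = (ch3 x y z j, True, w3 ex ey ez j)
                  \<and> G ! tri_h qT qM qB oT oM oB j = (ch3 x y z j, False, w3 ex ey ez j)"
    and d: "distinct [x, y, z]" and r: "r3_ok ex ey ez oT oM oB"
  shows "FK G' = FK G"
proof -
  define S where "S = {qT, qM, qB}"
  define s where "s = sig S"
  define tt where "tt = tri_t qT qM qB oT oM oB"
  define hh where "hh = tri_h qT qM qB oT oM oB"
  define tt' where "tt' = tri_t qT qM qB (\<not>oT) (\<not>oM) (\<not>oB)"
  define hh' where "hh' = tri_h qT qM qB (\<not>oT) (\<not>oM) (\<not>oB)"
  define T where "T = {x, y, z}"
  have fs: "far qM qT" "far qB qT" "far qB qM" using f by (auto simp: far_def)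
  have F: "fars S" unfolding S_def fars_def using f fs by auto
  have s_lt: "s i < length G" if "i < length G" for i
  proof (cases "\<exists>q\<in>S. i \<in> {q, Suc q}")
    case True
    then obtain q where q: "q \<in> S" "i \<in> {q, Suc q}" by blast
    have "s i \<in> {q, Suc q}" unfolding s_def by (rule sig_blk[OF F q])
    moreover have "Suc q < length G" using q(1) bl unfolding S_def by auto
    ultimately show ?thesis by auto
  next
    case False
    then have "s i = i" unfolding s_def using sig_out[of S i] by blast
    then show ?thesis using that by simp
  qed
  have s_ok: "s i < length G' \<and> G' ! s i = G ! i" if "i < length G" for i
    using s_lt[OF that] sw[OF that] len by (simp add: s_def S_def)
  have s_inv: "s (s i) = i" for i unfolding s_def by (rule sig_invol[OF F])
  have G_of: "G ! s i = G' ! i" if "i < length G" for i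
    using sw[OF s_lt[OF that]] s_inv by (simp add: s_def S_def)
  have L: "labels G' = labels G"
  proof
    show "labels G' \<subseteq> labels G"
    proof
      fix c assume "c \<in> labels G'"
      then obtain i where i: "i < length G'" "c = fst (G' ! i)" by (auto simp: labels_def in_set_conv_nth)
      then have "c = fst (G ! s i)" using G_of len by simp
      then show "c \<in> labels G" using s_lt i len by (auto simp: labels_def)
    qed
  next
    show "labels G \<subseteq> labels G'"
    proof
      fix c assume "c \<in> labels G"
      then obtain i where i: "i < length G" "c = fst (G ! i)" by (auto simp: labels_def in_set_conv_nth)
      then have c': "c = fst (G' ! s i)" using s_ok by simp
      have "G' ! s i \<in> set G'" using s_ok[OF i(1)] by (metis nth_mem)
      then show "c \<in> labels G'" using c' by (auto simp: labels_def)
    qed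
  qed
  have w: "wsign G' c = wsign G c" if "c \<in> labels G" for c by (rule pos_map(3)[OF wf s_ok that])
  have tp: "tailpos G' c = s (tailpos G c)" "headpos G' c = s (headpos G c)" if "c \<in> labels G" for c
    using pos_map[OF wf s_ok that] by simp_all
  have tri_lt: "tt j < length G" "hh j < length G" if "j < 3" for j
    using that bl b2n_le[of oT] b2n_le[of oM] b2n_le[of oB] b2n_le[of "\<not>oT"] b2n_le[of "\<not>oM"] b2n_le[of "\<not>oB"]
    by (auto simp: tt_def hh_def tri_t_def tri_h_def)
  have chpos: "tailpos G (ch3 x y z j) = tt j" "headpos G (ch3 x y z j) = hh j" if "j < 3" for j
    using tailpos_eq[OF wf(1) tri_lt(1)[OF that]] headpos_eq[OF wf(1) tri_lt(2)[OF that]] pts[OF that]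
    by (simp_all add: tt_def hh_def)
  have chL: "ch3 x y z j \<in> labels G" if "j < 3" for j
    using pts[OF that] tri_lt[OF that] unfolding labels_def tt_def
    by (metis fst_conv nth_mem image_eqI)
  have chw: "wsign G (ch3 x y z j) = w3 ex ey ez j" if "j < 3" for j
    using chpos[OF that] pts[OF that] by (simp add: wsign_def tt_def)
  have chpos': "tailpos G' (ch3 x y z j) = tt' j" "headpos G' (ch3 x y z j) = hh' j" if "j < 3" for j
    using tp[OF chL[OF that]] chpos[OF that] sig_tri[OF F[unfolded S_def] that]
    by (simp_all add: s_def S_def tt_def hh_def tt'_def hh'_def)
  have Kg: "kap G (ch3 x y z dd) (ch3 x y z c) = Kt qT qM qB oT oM oB dd c" if "dd < 3" "c < 3" for dd c
    using chpos[OF that(1)] chpos[OF that(2)] by (simp add: kap_def Kt_def tt_def hh_def)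
  have Kg': "kap G' (ch3 x y z dd) (ch3 x y z c) = Kt qT qM qB (\<not>oT) (\<not>oM) (\<not>oB) dd c" if "dd < 3" "c < 3" for dd c
    using chpos'[OF that(1)] chpos'[OF that(2)] by (simp add: kap_def Kt_def tt'_def hh'_def)
  have Tch: "T = ch3 x y z ` {0, 1, 2}" by (auto simp: T_def ch3_def)
  have TL: "T \<subseteq> labels G" unfolding Tch using chL by auto
  have outside: "tailpos G c \<notin> {q, Suc q} \<and> headpos G c \<notin> {q, Suc q}"
    if c: "c \<in> labels G" "c \<notin> T" and q: "q \<in> S" for c q
  proof -
    note pc = wf_pos[OF wf(1) c(1)]
    have *: False if i1: "i \<in> {q, Suc q}" and i2: "fst (G ! i) = c" for i
    proof -
      obtain j where j: "j < 3" "i = tt j \<or> i = hh j"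
        using blk_cover[of q qT qM qB i oT oM oB] q i1 unfolding S_def tt_def hh_def by blast
      then have "fst (G ! i) = ch3 x y z j" using pts[OF j(1)] by (auto simp: tt_def hh_def)
      moreover have "ch3 x y z j \<in> T" using j(1) unfolding Tch j3 by auto
      ultimately show False using i2 c(2) by simp
    qed
    show ?thesis using *[of "tailpos G c"] *[of "headpos G c"] pc by auto
  qed
  have k: "kap G' dd c = kap G dd c" if c: "c \<in> labels G" and dL: "dd \<in> labels G" and nT: "\<not> (c \<in> T \<and> dd \<in> T)" for c dd
  proof -
    define tc where "tc = tailpos G c"
    define hc where "hc = headpos G c"
    define td where "td = tailpos G dd"
    define hd where "hd = headpos G dd"
    have outc: "\<forall>q\<in>S. tc \<notin> {q, Suc q}" "\<forall>q\<in>S. hc \<notin> {q, Suc q}" if "c \<notin> T"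
      using outside[OF c that] unfolding tc_def hc_def by blast+
    have outd: "\<forall>q\<in>S. td \<notin> {q, Suc q}" "\<forall>q\<in>S. hd \<notin> {q, Suc q}" if "dd \<notin> T"
      using outside[OF dL that] unfolding td_def hd_def by blast+
    have o2: "ord_eq u v (s u) (s v)" if uv: "u = tc \<or> u = hc" "v = td \<or> v = hd" for u v
    proof -
      have out_uv: "(\<forall>q\<in>S. u \<notin> {q, Suc q}) \<or> (\<forall>q\<in>S. v \<notin> {q, Suc q})"
      proof (cases "c \<in> T")
        case False
        then show ?thesis using outc uv(1) by blast
      next
        case True
        then have "dd \<notin> T" using nT by simp
        then show ?thesis using outd uv(2) by blast
      qed
      show ?thesis unfolding s_def
        by (rule sig_ord[OF F]) (use out_uv in blast)
    qed
    have cc: "tc = hc" if q: "q \<in> S" "tc \<in> {q, Suc q}" "hc \<in> {q, Suc q}" for q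
    proof (cases "c \<in> T")
      case False
      then show ?thesis using outc(1) q by blast
    next
      case True
      then obtain j0 where j0: "j0 \<in> {0,1,2}" "c = ch3 x y z j0" unfolding Tch by auto
      then have j: "j0 < 3" by auto
      have "tc = tt j0" "hc = hh j0" unfolding tc_def hc_def j0(2) by (rule chpos[OF j])+
      then have False using tri_diff_blk[OF f j, of q oT oM oB] q unfolding S_def tt_def hh_def by simp
      then show ?thesis ..
    qed
    have o1: "ord_eq tc hc (s tc) (s hc)"
      unfolding s_def by (rule sig_ord[OF F cc])
    have "kap G' dd c = kappos (s td) (s hd) (s tc) (s hc)"
      unfolding kap_def tp[OF c] tp[OF dL] tc_def hc_def td_def hd_def ..
    also have "\<dots> = kappos td hd tc hc"
      by (rule sym, rule kappos_ord_transfer[OF o1 o2 ord_eq_sym[OF o2] o2 ord_eq_sym[OF o2]]) simp_all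
    also have "\<dots> = kap G dd c" unfolding kap_def tc_def hc_def td_def hd_def ..
    finally show ?thesis .
  qed
  have kk: "kap G' dd c = kap G dd c" if "c \<in> labels G" "dd \<in> labels G" "\<not> (c \<in> T \<and> dd \<in> T)" for c dd
    using k that .
  have O: "kap G dd y = kap G dd x + kap G dd z" if dd: "dd \<in> labels G - T" for dd
  proof -
    have ddL: "dd \<in> labels G" "dd \<notin> T" using dd by auto
    note o = outside[OF ddL]
    have kR: "kap G dd (ch3 x y z j) = of_bool (cyc (tt j) (headpos G dd) (hh j)) - of_bool (cyc (tt j) (tailpos G dd) (hh j))"
      if j: "j < 3" for j
    proof -
      have "tt j \<in> {qT, Suc qT} \<or> tt j \<in> {qM, Suc qM}" "hh j \<in> {qM, Suc qM} \<or> hh j \<in> {qB, Suc qB}"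
        using j tri_blk[of qT qM qB oT oM oB] unfolding j3 tt_def hh_def by auto
      then have "tailpos G dd \<notin> {tt j, hh j}" "headpos G dd \<notin> {tt j, hh j}"
        using o[of qT] o[of qM] o[of qB] unfolding S_def by auto
      then show ?thesis unfolding kap_def chpos[OF j] by (rule kappos_R)
    qed
    have kout: "k \<notin> {qT, Suc qT, qM, Suc qM, qB, Suc qB}" if "k \<in> {tailpos G dd, headpos G dd}" for k
      using o[of qT] o[of qM] o[of qB] that unfolding S_def by auto
    have R1: "(of_bool (cyc (tt 0) k (hh 0)) + of_bool (cyc (tt 2) k (hh 2)) - of_bool (cyc (tt 1) k (hh 1)) :: int)
       = (if cyc qT qM qB then 0 else 1)" if "k \<in> {tailpos G dd, headpos G dd}" for k
      unfolding tt_def hh_def by (rule R_rel[OF f kout[OF that]])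
    have "kap G dd (ch3 x y z 1) = kap G dd (ch3 x y z 0) + kap G dd (ch3 x y z 2)"
      using R1[of "tailpos G dd"] R1[of "headpos G dd"] kR[of 0] kR[of 1] kR[of 2] by simp
    then show ?thesis by (simp add: ch3_def)
  qed
  obtain cT cM cB where cq: "(cT, cM, cB) \<in> {(0,2,4),(0,4,2),(2,0,4),(2,4,0),(4,0,2),(4,2,0)}"
    and cK: "\<And>oT oM oB dd c. Kt qT qM qB oT oM oB dd c = Kt cT cM cB oT oM oB dd c"
    using Kt_lift[OF f] by blast
  note T12 = T12_canon[OF cq r]
  have T3ch: "T = {ch3 x y z 0, ch3 x y z 1, ch3 x y z 2}" by (simp add: T_def ch3_def)
  have d3: "distinct [ch3 x y z 0, ch3 x y z 1, ch3 x y z 2]" using d by (simp add: ch3_def)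
  note S3 = sum3[OF d3]
  have c3: "(0::nat) < 3" "(1::nat) < 3" "(2::nat) < 3" by simp_all
  have T1: "(\<Sum>dd\<in>T. wsign G dd * kap G dd c) = (\<Sum>dd\<in>T. wsign G dd * kap G' dd c)" if c: "c \<in> T" for c
  proof -
    obtain j where j: "j \<in> {0,1,2}" "c = ch3 x y z j" using c unfolding Tch by auto
    have j3': "j < 3" using j by auto
    have "ex * Kt cT cM cB oT oM oB 0 j + ey * Kt cT cM cB oT oM oB 1 j + ez * Kt cT cM cB oT oM oB 2 j =
          ex * Kt cT cM cB (\<not>oT) (\<not>oM) (\<not>oB) 0 j + ey * Kt cT cM cB (\<not>oT) (\<not>oM) (\<not>oB) 1 j + ez * Kt cT cM cB (\<not>oT) (\<not>oM) (\<not>oB) 2 j"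
      using T12(1) j(1) by blast
    then show ?thesis unfolding T3ch S3 j(2) chw[OF c3(1)] chw[OF c3(2)] chw[OF c3(3)]
       Kg[OF c3(1) j3'] Kg[OF c3(2) j3'] Kg[OF c3(3) j3'] Kg'[OF c3(1) j3'] Kg'[OF c3(2) j3'] Kg'[OF c3(3) j3'] cK
      by (simp add: w3_def)
  qed
  have T2: "(\<Sum>dd\<in>T. wsign G dd * kap G dd y) = (\<Sum>dd\<in>T. wsign G dd * kap G dd x) + (\<Sum>dd\<in>T. wsign G dd * kap G dd z)"
  proof -
    have xyz: "x = ch3 x y z 0" "y = ch3 x y z 1" "z = ch3 x y z 2" by (simp_all add: ch3_def)
    have "(\<Sum>dd\<in>T. wsign G dd * kap G dd (ch3 x y z 1)) = (\<Sum>dd\<in>T. wsign G dd * kap G dd (ch3 x y z 0)) + (\<Sum>dd\<in>T. wsign G dd * kap G dd (ch3 x y z 2))"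
      unfolding T3ch S3 chw[OF c3(1)] chw[OF c3(2)] chw[OF c3(3)]
       Kg[OF c3(1) c3(1)] Kg[OF c3(2) c3(1)] Kg[OF c3(3) c3(1)]
       Kg[OF c3(1) c3(2)] Kg[OF c3(2) c3(2)] Kg[OF c3(3) c3(2)]
       Kg[OF c3(1) c3(3)] Kg[OF c3(2) c3(3)] Kg[OF c3(3) c3(3)] cK
      using T12(2) by (simp add: w3_def)
    then show ?thesis using xyz by simp
  qed
  have T3: "(\<Sum>dd\<in>T. Poly_Mapping.single (phi (nat \<bar>I c\<bar>) (kap G dd c * I dd)) (kap G dd c * wsign G dd)) =
       (\<Sum>dd\<in>T. Poly_Mapping.single (phi (nat \<bar>I c\<bar>) (kap G' dd c * I dd)) (kap G' dd c * wsign G dd))"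
    if I: "I y = I x + I z" and c: "c \<in> T" for I c
  proof -
    obtain j where j: "j \<in> {0,1,2}" "c = ch3 x y z j" using c unfolding Tch by auto
    have j3': "j < 3" using j by auto
    have Ic: "I c = (\<lambda>j::nat. if j = 0 then I x else if j = 1 then I x + I z else I z) j"
      using j I by (auto simp: ch3_def)
    have I3: "I (ch3 x y z 0) = I x" "I (ch3 x y z 1) = I x + I z" "I (ch3 x y z 2) = I z"
      using I by (simp_all add: ch3_def)
    note T3c = T3_canon[OF cq r j(1), of "I x" "I z", folded Ic]
    show ?thesis unfolding T3ch S3 j(2)[symmetric] chw[OF c3(1)] chw[OF c3(2)] chw[OF c3(3)] I3
       Kg[OF c3(1) j3', folded j(2)] Kg[OF c3(2) j3', folded j(2)] Kg[OF c3(3) j3', folded j(2)]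
       Kg'[OF c3(1) j3', folded j(2)] Kg'[OF c3(2) j3', folded j(2)] Kg'[OF c3(3) j3', folded j(2)] cK
      using T3c by (simp add: w3_def)
  qed
  show ?thesis
    by (rule omega3_abs[OF L w T_def TL kk O T1 T2 T3]) auto
qed

lemma mset3:
  assumes "mset [a, b, c] = mset [d, e, f]"
  shows "(a = d \<and> b = e \<and> c = f) \<or> (a = d \<and> b = f \<and> c = e) \<or> (a = e \<and> b = d \<and> c = f) \<or>
         (a = e \<and> b = f \<and> c = d) \<or> (a = f \<and> b = d \<and> c = e) \<or> (a = f \<and> b = e \<and> c = d)"
  using assms by (auto simp: add_eq_conv_ex)

lemma pts_lemma:
  assumes rp: "r3_pairs x y z ex ey ez oT oM oB = (PT, PM, PB)"
    and bT: "\<And>b. b \<le> 1 \<Longrightarrow> G ! (qT + b) = PT ! b"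
    and bM: "\<And>b. b \<le> 1 \<Longrightarrow> G ! (qM + b) = PM ! b"
    and bB: "\<And>b. b \<le> 1 \<Longrightarrow> G ! (qB + b) = PB ! b"
    and j: "j < 3"
  shows "G ! tri_t qT qM qB oT oM oB j = (ch3 x y z j, True, w3 ex ey ez j)
       \<and> G ! tri_h qT qM qB oT oM oB j = (ch3 x y z j, False, w3 ex ey ez j)"
proof -
  have b: "b2n v \<le> 1" for v by (simp add: b2n_def)
  have P: "PT = (if oT then [(x, True, ex), (y, True, ey)] else [(y, True, ey), (x, True, ex)])"
    "PM = (if oM then [(x, False, ex), (z, True, ez)] else [(z, True, ez), (x, False, ex)])"
    "PB = (if oB then [(y, False, ey), (z, False, ez)] else [(z, False, ez), (y, False, ey)])"
    using rp by (simp_all add: r3_pairs_def)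
  from j consider "j = 0" | "j = 1" | "j = 2" by linarith
  then show ?thesis
    using bT[OF b] bM[OF b] bB[OF b] P
    by cases (simp_all add: tri_t_def tri_h_def ch3_def w3_def b2n_def split: if_splits)
qed


lemma sw_lemma:
  fixes xs ys zs ws :: "'a list"
  defines "p1 \<equiv> length xs" and "p2 \<equiv> length xs + 2 + length ys" and "p3 \<equiv> length xs + 2 + length ys + 2 + length zs"
  assumes i: "i < length (xs @ [a1, b1] @ ys @ [a2, b2] @ zs @ [a3, b3] @ ws)"
  shows "(xs @ [b1, a1] @ ys @ [b2, a2] @ zs @ [b3, a3] @ ws) ! sig {p1, p2, p3} i
       = (xs @ [a1, b1] @ ys @ [a2, b2] @ zs @ [a3, b3] @ ws) ! i"
proof -
  consider "i < p1" | "i = p1" | "i = Suc p1" | "Suc p1 < i" "i < p2" | "i = p2" | "i = Suc p2"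
    | "Suc p2 < i" "i < p3" | "i = p3" | "i = Suc p3" | "Suc p3 < i" by linarith
  then show ?thesis
  proof cases
    case 1
    then have "sig {p1, p2, p3} i = i" unfolding sig_def p1_def p2_def p3_def by auto
    then show ?thesis using 1 by (simp add: nth_append p1_def)
  next
    case 2
    then have "sig {p1, p2, p3} i = Suc p1" unfolding sig_def by simp
    then show ?thesis using 2 by (simp add: nth_append p1_def)
  next
    case 3
    then have "sig {p1, p2, p3} i = p1" unfolding sig_def p1_def p2_def p3_def by auto
    then show ?thesis using 3 by (simp add: nth_append p1_def)
  next
    case 4
    then have sg: "sig {p1, p2, p3} i = i" unfolding sig_def p1_def p2_def p3_def by auto
    define k where "k = i - Suc (Suc p1)"
    have ik: "i = Suc (Suc (p1 + k))" "k < length ys" using 4 unfolding k_def p1_def p2_def p3_def by auto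
    show ?thesis unfolding sg using ik by (simp add: nth_append p1_def)
  next
    case 5
    then have "sig {p1, p2, p3} i = Suc p2" unfolding sig_def by simp
    then show ?thesis using 5 by (simp add: nth_append p2_def)
  next
    case 6
    then have "sig {p1, p2, p3} i = p2" unfolding sig_def p1_def p2_def p3_def by auto
    then show ?thesis using 6 by (simp add: nth_append p2_def)
  next
    case 7
    then have sg: "sig {p1, p2, p3} i = i" unfolding sig_def p1_def p2_def p3_def by auto
    define k where "k = i - Suc (Suc p2)"
    have ik: "i = Suc (Suc (p2 + k))" "k < length zs" using 7 unfolding k_def p1_def p2_def p3_def by auto
    show ?thesis unfolding sg using ik by (simp add: nth_append p2_def)
  next
    case 8
    then have "sig {p1, p2, p3} i = Suc p3" unfolding sig_def by simp
    then show ?thesis using 8 by (simp add: nth_append p3_def)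
  next
    case 9
    then have "sig {p1, p2, p3} i = p3" unfolding sig_def p1_def p2_def p3_def by auto
    then show ?thesis using 9 by (simp add: nth_append p3_def)
  next
    case 10
    then have sg: "sig {p1, p2, p3} i = i" unfolding sig_def p1_def p2_def p3_def by auto
    define k where "k = i - Suc (Suc p3)"
    have ik: "i = Suc (Suc (p3 + k))" using 10 unfolding k_def by auto
    show ?thesis unfolding sg using ik by (simp add: nth_append p3_def)
  qed
qed


lemma move_omega3:
  assumes wf: "gauss_wf (xs @ P1 @ ys @ P2 @ zs @ P3 @ ws)" "gauss_wf (xs @ rev P1 @ ys @ rev P2 @ zs @ rev P3 @ ws)"
    and d: "distinct [x, y, z]" and r: "r3_ok ex ey ez oT oM oB"
    and rp: "r3_pairs x y z ex ey ez oT oM oB = (PT, PM, PB)"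
    and ms: "mset [P1, P2, P3] = mset [PT, PM, PB]"
  shows "FK (xs @ rev P1 @ ys @ rev P2 @ zs @ rev P3 @ ws) = FK (xs @ P1 @ ys @ P2 @ zs @ P3 @ ws)"
proof -
  have lP: "length PT = 2" "length PM = 2" "length PB = 2"
    using rp by (auto simp: r3_pairs_def)
  have "length P1 = 2 \<and> length P2 = 2 \<and> length P3 = 2" using mset3[OF ms] lP by auto
  then obtain a1 b1 a2 b2 a3 b3 where P: "P1 = [a1, b1]" "P2 = [a2, b2]" "P3 = [a3, b3]"
    by (metis (no_types, lifting) One_nat_def Suc_1 length_0_conv length_Suc_conv)
  define G where "G = xs @ P1 @ ys @ P2 @ zs @ P3 @ ws"
  define G' where "G' = xs @ rev P1 @ ys @ rev P2 @ zs @ rev P3 @ ws"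
  define p1 where "p1 = length xs"
  define p2 where "p2 = length xs + 2 + length ys"
  define p3 where "p3 = length xs + 2 + length ys + 2 + length zs"
  have G_eq: "G = xs @ [a1, b1] @ ys @ [a2, b2] @ zs @ [a3, b3] @ ws" by (simp add: G_def P)
  have G'_eq: "G' = xs @ [b1, a1] @ ys @ [b2, a2] @ zs @ [b3, a3] @ ws" by (simp add: G'_def P)
  have sw: "G' ! sig {p1, p2, p3} i = G ! i" if "i < length G" for i
    using sw_lemma[of i xs a1 b1 ys a2 b2 zs a3 b3 ws] that unfolding G_eq G'_eq p1_def p2_def p3_def by simp
  have len: "length G' = length G" by (simp add: G_def G'_def)
  have bl: "Suc p1 < length G" "Suc p2 < length G" "Suc p3 < length G"
    by (simp_all add: G_eq p1_def p2_def p3_def)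
  have far: "far p1 p2" "far p1 p3" "far p2 p3" "far p2 p1" "far p3 p1" "far p3 p2"
    by (auto simp: far_def p1_def p2_def p3_def)
  have blk1: "G ! (p1 + b) = P1 ! b" if "b \<le> 1" for b
    using that by (cases b) (auto simp: G_eq P p1_def nth_append)
  have blk2: "G ! (p2 + b) = P2 ! b" if "b \<le> 1" for b
    using that by (cases b) (auto simp: G_eq P p2_def nth_append)
  have blk3: "G ! (p3 + b) = P3 ! b" if "b \<le> 1" for b
    using that by (cases b) (auto simp: G_eq P p3_def nth_append)
  have core: "FK G' = FK G"
    if S: "{qT, qM, qB} = {p1, p2, p3}" and f: "far qT qM" "far qT qB" "far qM qB"
      and bT: "\<And>b. b \<le> 1 \<Longrightarrow> G ! (qT + b) = PT ! b"
      and bM: "\<And>b. b \<le> 1 \<Longrightarrow> G ! (qM + b) = PM ! b"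
      and bB: "\<And>b. b \<le> 1 \<Longrightarrow> G ! (qB + b) = PB ! b" for qT qM qB
  proof (rule omega3_core[OF wf[folded G_def G'_def] f _ _ _ len _ _ d r])
    show "Suc qT < length G" "Suc qM < length G" "Suc qB < length G"
      using S bl by (metis insertCI insertE singletonD)+
    show "\<And>i. i < length G \<Longrightarrow> G' ! sig {qT, qM, qB} i = G ! i" using sw S by simp
    show "\<And>j. j < 3 \<Longrightarrow> G ! tri_t qT qM qB oT oM oB j = (ch3 x y z j, True, w3 ex ey ez j)
                  \<and> G ! tri_h qT qM qB oT oM oB j = (ch3 x y z j, False, w3 ex ey ez j)"
      by (rule pts_lemma[OF rp bT bM bB])
  qed
  from mset3[OF ms] have "FK G' = FK G"
  proof (elim disjE conjE)
    assume "P1 = PT" "P2 = PM" "P3 = PB"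
    then show ?thesis by (intro core[of p1 p2 p3]) (use far blk1 blk2 blk3 in auto)
  next
    assume "P1 = PT" "P2 = PB" "P3 = PM"
    then show ?thesis by (intro core[of p1 p3 p2]) (use far blk1 blk2 blk3 in auto)
  next
    assume "P1 = PM" "P2 = PT" "P3 = PB"
    then show ?thesis by (intro core[of p2 p1 p3]) (use far blk1 blk2 blk3 in auto)
  next
    assume "P1 = PM" "P2 = PB" "P3 = PT"
    then show ?thesis by (intro core[of p3 p1 p2]) (use far blk1 blk2 blk3 in auto)
  next
    assume "P1 = PB" "P2 = PT" "P3 = PM"
    then show ?thesis by (intro core[of p2 p3 p1]) (use far blk1 blk2 blk3 in auto)
  next
    assume "P1 = PB" "P2 = PM" "P3 = PT"
    then show ?thesis by (intro core[of p3 p2 p1]) (use far blk1 blk2 blk3 in auto)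
  qed
  then show ?thesis by (simp add: G_def G'_def)
qed

lemma move_FK:
  assumes "gauss_move G G'" "gauss_wf G" "gauss_wf G'"
  shows "FK G' = FK G"
  using assms
proof (induction rule: gauss_move.induct)
  case (rotate G n)
  then show ?case by (rule move_rotate)
next
  case (relabel f G)
  then show ?case by (intro move_relabel[OF relabel.prems(1,2) refl relabel.hyps])
next
  case (omega1 c xs ys e ov)
  then show ?case by (intro move_omega1) simp_all
next
  case (omega2 a xs ys zs b e Q P)
  then show ?case by (intro move_omega2) simp_all
next
  case (omega2' a xs ys zs b e Q P)
  then show ?case by (intro move_omega2') simp_all
next
  case (omega3 xs P1 ys P2 zs P3 ws x y z ex ey ez oT oM oB PT PM PB)
  then show ?case by (intro move_omega3) simp_all
qed

theorem theorem3p1: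
  fixes K K' :: gauss
  assumes "gauss_wf K" and "gauss_equiv K K'"
  shows "FK K = FK K'"
proof -
  have "(symclp (\<lambda>G G'. gauss_wf G \<and> gauss_wf G' \<and> gauss_move G G'))\<^sup>*\<^sup>* K K'"
    using assms(2) by (simp add: gauss_equiv_def)
  then show ?thesis
  proof (induction rule: rtranclp_induct)
    case base
    then show ?case by simp
  next
    case (step G G')
    from step.hyps(2) have "FK G' = FK G"
    proof (cases rule: symclpE)
      case base
      then show ?thesis using move_FK by blast
    next
      case sym
      then show ?thesis using move_FK by metis
    qed
    then show ?case using step.IH by simp
  qed
qed

end
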